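(* Assume $|p_1|=\Gamma_{\mathrm{rel}}\ell$ and $g[\![\rho]\!]-\Gamma_{\mathrm{rel}}^2\coth(p_1/\Gamma_{\mathrm{rel}})<0$, let $\lambda^*>0$ be the unique solution of $g[\![\rho]\!]=\Gamma_{\mathrm{rel}}^2\coth(p_1/\Gamma_{\mathrm{rel}})-\lambda^2\coth((p_1-p_0)/\lambda)$, and let $\varphi^*$ be a generator of the null space of $\mathcal L_{\lambda^*}$. Then $$\frac{d}{d\lambda}\Big(\mathcal L_\lambda\varphi^*\Big)\Big|_{\lambda=\lambda^*}\notin\mathcal R(\mathcal L_{\lambda^*}).$$
   Context: Constants $g>0$, $\ell>0$, $p_0<p_1<0$, $[\![\rho]\!]<0$, $\Gamma_{\mathrm{rel}}>0$. Period $2\pi$ in $q$. $D_1=\{(q,p):p_1<p<0\}$, $D_2=\{(q,p):p_0<p<p_1\}$, $D=D_1\cup D_2$, $I=\{p=p_1\}$, $T=\{p=0\}$; $f^{(i)}=f|_{D_i}$, $[\![f]\!]=f^{(1)}|_I-f^{(2)}|_I$. $C^{k+\alpha}_{\mathrm{per}}$ means $C^{k+\alpha}$, $2\pi$-periodic and even in $q$; $d(\varphi)=\frac1{2\pi}\int_{-\pi}^\pi\varphi(q,p_1)dq$. $X=\{\varphi\in C^{2+\alpha}_{\mathrm{per}}(\overline D\setminus I)\cap C^{\alpha}_{\mathrm{per}}(\overline D):\varphi|_{p=p_0}=0,\ \varphi^{(i)}\in C^{1+\alpha}_{\mathrm{per}}(\overline{D_i})\}$, $Y=Y_1\times Y_2\times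 Y_3\times Y_4$ with $Y_1=C^{2+\alpha}_{\mathrm{per}}(\overline{D_1}\setminus I)\cap C^\alpha_{\mathrm{per}}(\overline{D_1})$, $Y_2=C^{2+\alpha}_{\mathrm{per}}(\overline{D_2}\setminus I)\cap C^\alpha_{\mathrm{per}}(\overline{D_2})$, $Y_3=C^\alpha_{\mathrm{per}}(I)$, $Y_4=C^{2+\alpha}_{\mathrm{per}}(T)$. For $\lambda>0$ let $H_p(\cdot;\lambda)=1/\Gamma_{\mathrm{rel}}$ on $D_1$ and $=1/\lambda$ on $D_2$, and $\mathcal L_\lambda:X\to Y$, $\mathcal L_\lambda\varphi=\big((\partial_p^2+H_p^2\partial_q^2)\varphi^{(1)},\ (\partial_p^2+H_p^2\partial_q^2)\varphi^{(2)},\ 2[\![H_p^{-3}\varphi_p]\!]-2g[\![\rho]\!]\varphi|_I,\ (\varphi-d(\varphi))|_T\big)$ (the linearization of the height-equation operator about the laminar flow with parameter $\lambda$; its $\lambda$-derivative is the mixed derivative $\mathcal F_{\lambda w}(\lambda^*,0)$). $\mathcal R$ denotes the range. *)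

theory Defs
  imports "HOL-Analysis.Analysis"
begin

text \<open>Layer 1: p1 < p < 0 (closure p1 \<le> p \<le> 0); layer 2: p0 < p < p1; interface I: p = p1;
  top T: p = 0.\<close>

definition coth :: "real \<Rightarrow> real" where
  "coth x = cosh x / sinh x"

definition holder_on :: "real \<Rightarrow> 'a::metric_space set \<Rightarrow> ('a \<Rightarrow> real) \<Rightarrow> bool" where
  "holder_on a S f \<longleftrightarrow> (\<exists>C. \<forall>x\<in>S. \<forall>y\<in>S. \<bar>f x - f y\<bar> \<le> C * dist x y powr a)"

text \<open>Partial derivative on a strip UNIV \<times> J: True = derivative in q,
  False = derivative in p (one-sided at endpoints of J, i.e. taken within J).\<close>
definition pdiff :: "real set \<Rightarrow> bool \<Rightarrow> (real \<times> real \<Rightarrow> real) \<Rightarrow> real \<times> real \<Rightarrow> real" where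
  "pdiff J b f x = (if b then deriv (\<lambda>t. f (t, snd x)) (fst x)
                    else vector_derivative (\<lambda>t. f (fst x, t)) (at (snd x) within J))"

definition pdiffable :: "real set \<Rightarrow> bool \<Rightarrow> (real \<times> real \<Rightarrow> real) \<Rightarrow> real \<times> real \<Rightarrow> bool" where
  "pdiffable J b f x = (if b then (\<lambda>t. f (t, snd x)) differentiable (at (fst x))
                        else (\<lambda>t. f (fst x, t)) differentiable (at (snd x) within J))"

fun pd :: "real set \<Rightarrow> bool list \<Rightarrow> (real \<times> real \<Rightarrow> real) \<Rightarrow> real \<times> real \<Rightarrow> real" where
  "pd J [] f = f"
| "pd J (b # bs) f = pdiff J b (pd J bs f)"

definition Cka :: "real \<Rightarrow> nat \<Rightarrow> real set \<Rightarrow> (real \<times> real \<Rightarrow> real) \<Rightarrow> bool" where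
  "Cka a k J f \<longleftrightarrow>
     (\<forall>bs b x. length bs < k \<longrightarrow> x \<in> UNIV \<times> J \<longrightarrow> pdiffable J b (pd J bs f) x) \<and>
     (\<forall>bs. length bs \<le> k \<longrightarrow> continuous_on (UNIV \<times> J) (pd J bs f)) \<and>
     (\<forall>bs. length bs = k \<longrightarrow> holder_on a (UNIV \<times> J) (pd J bs f))"

definition per_even :: "real set \<Rightarrow> (real \<times> real \<Rightarrow> real) \<Rightarrow> bool" where
  "per_even J f \<longleftrightarrow> (\<forall>q p. p \<in> J \<longrightarrow> f (q + 2 * pi, p) = f (q, p) \<and> f (- q, p) = f (q, p))"

text \<open>C^{2+a}(closure D minus I) is read piecewise: C^{2+a} up to the boundary on each
  of the two connected pieces {p1 < p \<le> 0} and {p0 \<le> p < p1}.\<close>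
definition Xsp :: "real \<Rightarrow> real \<Rightarrow> real \<Rightarrow> (real \<times> real \<Rightarrow> real) \<Rightarrow> bool" where
  "Xsp a p0 p1 \<phi> \<longleftrightarrow>
     per_even {p0..0} \<phi> \<and>
     Cka a 2 {p1<..0} \<phi> \<and> Cka a 2 {p0..<p1} \<phi> \<and>
     Cka a 0 {p0..0} \<phi> \<and>
     Cka a 1 {p1..0} \<phi> \<and> Cka a 1 {p0..p1} \<phi> \<and>
     (\<forall>q. \<phi> (q, p0) = 0)"

definition dmean :: "real \<Rightarrow> (real \<times> real \<Rightarrow> real) \<Rightarrow> real" where
  "dmean p1 \<phi> = integral {-pi..pi} (\<lambda>q. \<phi> (q, p1)) / (2 * pi)"

type_synonym Yel = "(real \<times> real \<Rightarrow> real) \<times> (real \<times> real \<Rightarrow> real) \<times> (real \<Rightarrow> real) \<times> (real \<Rightarrow> real)"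

text \<open>Components 1, 2 are the operators on the layers
  (derivatives taken on the pieces {p1<p\<le>0} and {p0\<le>p<p1}); component 3 lives on I
  (one-sided normal derivatives from each layer); component 4 lives on T.
  H_p = 1/\<Gamma> on D1 and 1/\<lambda> on D2, so H_p^{-3} = \<Gamma>^3 resp. \<lambda>^3.\<close>
definition Lop :: "real \<Rightarrow> real \<Rightarrow> real \<Rightarrow> real \<Rightarrow> real \<Rightarrow> real \<Rightarrow> (real \<times> real \<Rightarrow> real) \<Rightarrow> Yel" where
  "Lop g jrho Gam p0 p1 lam \<phi> =
    ((\<lambda>x. pd {p1<..0} [False, False] \<phi> x + (1 / Gam)^2 * pd {p1<..0} [True, True] \<phi> x),
     (\<lambda>x. pd {p0..<p1} [False, False] \<phi> x + (1 / lam)^2 * pd {p0..<p1} [True, True] \<phi> x),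
     (\<lambda>q. 2 * (Gam ^ 3 * pd {p1..0} [False] \<phi> (q, p1) - lam ^ 3 * pd {p0..p1} [False] \<phi> (q, p1))
          - 2 * g * jrho * \<phi> (q, p1)),
     (\<lambda>q. \<phi> (q, 0) - dmean p1 \<phi>))"

definition eqY :: "real \<Rightarrow> real \<Rightarrow> Yel \<Rightarrow> Yel \<Rightarrow> bool" where
  "eqY p0 p1 u v \<longleftrightarrow>
     (\<forall>x \<in> UNIV \<times> {p1<..0}. fst u x = fst v x) \<and>
     (\<forall>x \<in> UNIV \<times> {p0..<p1}. fst (snd u) x = fst (snd v) x) \<and>
     (\<forall>q. fst (snd (snd u)) q = fst (snd (snd v)) q) \<and>
     (\<forall>q. snd (snd (snd u)) q = snd (snd (snd v)) q)"

definition zeroY :: Yel where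
  "zeroY = ((\<lambda>_. 0), (\<lambda>_. 0), (\<lambda>_. 0), (\<lambda>_. 0))"

definition dLop :: "real \<Rightarrow> real \<Rightarrow> real \<Rightarrow> real \<Rightarrow> real \<Rightarrow> real \<Rightarrow> (real \<times> real \<Rightarrow> real) \<Rightarrow> Yel" where
  "dLop g jrho Gam p0 p1 lam0 \<phi> =
    ((\<lambda>x. deriv (\<lambda>l. fst (Lop g jrho Gam p0 p1 l \<phi>) x) lam0),
     (\<lambda>x. deriv (\<lambda>l. fst (snd (Lop g jrho Gam p0 p1 l \<phi>)) x) lam0),
     (\<lambda>q. deriv (\<lambda>l. fst (snd (snd (Lop g jrho Gam p0 p1 l \<phi>))) q) lam0),
     (\<lambda>q. deriv (\<lambda>l. snd (snd (snd (Lop g jrho Gam p0 p1 l \<phi>))) q) lam0))"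

definition in_range :: "real \<Rightarrow> real \<Rightarrow> real \<Rightarrow> real \<Rightarrow> real \<Rightarrow> real \<Rightarrow> real \<Rightarrow> Yel \<Rightarrow> bool" where
  "in_range a g jrho Gam p0 p1 lam v \<longleftrightarrow>
     (\<exists>\<psi>. Xsp a p0 p1 \<psi> \<and> eqY p0 p1 (Lop g jrho Gam p0 p1 lam \<psi>) v)"

text \<open>\<phi> generates the null space of L_\<lambda> (elements of X identified when equal on the
  closed strip p0 \<le> p \<le> 0).\<close>
definition generates_kernel :: "real \<Rightarrow> real \<Rightarrow> real \<Rightarrow> real \<Rightarrow> real \<Rightarrow> real \<Rightarrow> real \<Rightarrow> (real \<times> real \<Rightarrow> real) \<Rightarrow> bool" where
  "generates_kernel a g jrho Gam p0 p1 lam \<phi> \<longleftrightarrow>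
     Xsp a p0 p1 \<phi> \<and> eqY p0 p1 (Lop g jrho Gam p0 p1 lam \<phi>) zeroY \<and>
     (\<exists>x \<in> UNIV \<times> {p0..0}. \<phi> x \<noteq> 0) \<and>
     (\<forall>\<psi>. Xsp a p0 p1 \<psi> \<longrightarrow> eqY p0 p1 (Lop g jrho Gam p0 p1 lam \<psi>) zeroY \<longrightarrow>
          (\<exists>c. \<forall>x \<in> UNIV \<times> {p0..0}. \<psi> x = c * \<phi> x))"

end

theory Submission
  imports Defs
begin

lemma holder_lip:
  fixes f :: "'a::metric_space \<Rightarrow> real"
  assumes M: "\<And>x. x \<in> S \<Longrightarrow> \<bar>f x\<bar> \<le> M"
    and L: "\<And>x y. x \<in> S \<Longrightarrow> y \<in> S \<Longrightarrow> \<bar>f x - f y\<bar> \<le> L * dist x y"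
    and a: "0 < a" "a \<le> 1" and L0: "L \<ge> 0"
  shows "holder_on a S f"
  unfolding holder_on_def
proof (intro exI[of _ "L + 2 * M"] ballI)
  fix x y assume x: "x \<in> S" and y: "y \<in> S"
  have M0: "M \<ge> 0" using M[OF x] by linarith
  have d0: "dist x y \<ge> 0" by simp
  show "\<bar>f x - f y\<bar> \<le> (L + 2 * M) * dist x y powr a"
  proof (cases "dist x y \<le> 1")
    case True
    have "dist x y = dist x y powr 1" using d0 by (cases "dist x y = 0") auto
    also have "\<dots> \<le> dist x y powr a" using powr_mono'[OF a(2) d0 True] .
    finally have "L * dist x y \<le> L * dist x y powr a" using L0 by (simp add: mult_left_mono)
    moreover have "0 \<le> 2 * M * dist x y powr a" using M0 by simp
    ultimately show ?thesis using L[OF x y] by (simp add: algebra_simps)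
  next
    case False
    have "1 \<le> dist x y powr a" using False a by (intro ge_one_powr_ge_zero) auto
    hence "2 * M * 1 \<le> 2 * M * dist x y powr a" using M0 by (intro mult_left_mono) auto
    moreover have "\<bar>f x - f y\<bar> \<le> 2 * M" using M[OF x] M[OF y] by linarith
    moreover have "0 \<le> L * dist x y powr a" using L0 by simp
    ultimately show ?thesis by (simp add: algebra_simps)
  qed
qed

lemma pdiff_cong:
  assumes eq: "\<And>y. y \<in> UNIV \<times> J \<Longrightarrow> f y = g y" and x: "x \<in> UNIV \<times> J"
  shows "pdiff J b f x = pdiff J b g x \<and> (pdiffable J b f x \<longleftrightarrow> pdiffable J b g x)"
proof (cases b)
  case True
  have "(\<lambda>t. f (t, snd x)) = (\<lambda>t. g (t, snd x))" using eq x by (auto simp: mem_Times_iff)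
  then show ?thesis using True by (simp add: pdiff_def pdiffable_def)
next
  case False
  have sJ: "snd x \<in> J" using x by (auto simp: mem_Times_iff)
  have e: "\<And>t. t \<in> J \<Longrightarrow> f (fst x, t) = g (fst x, t)" using eq by auto
  have "vector_derivative (\<lambda>t. f (fst x, t)) (at (snd x) within J) =
        vector_derivative (\<lambda>t. g (fst x, t)) (at (snd x) within J)"
    by (rule vector_derivative_cong_eq) (use e sJ in auto)
  moreover have "(\<lambda>t. f (fst x, t)) differentiable (at (snd x) within J) \<longleftrightarrow>
        (\<lambda>t. g (fst x, t)) differentiable (at (snd x) within J)"
  proof
    assume "(\<lambda>t. f (fst x, t)) differentiable (at (snd x) within J)"
    then show "(\<lambda>t. g (fst x, t)) differentiable (at (snd x) within J)"
      by (rule differentiable_transform_within[OF _ zero_less_one sJ]) (use e in auto)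
  next
    assume "(\<lambda>t. g (fst x, t)) differentiable (at (snd x) within J)"
    then show "(\<lambda>t. f (fst x, t)) differentiable (at (snd x) within J)"
      by (rule differentiable_transform_within[OF _ zero_less_one sJ]) (use e in auto)
  qed
  ultimately show ?thesis using False by (simp add: pdiff_def pdiffable_def)
qed

lemma pd_cong:
  assumes eq: "\<And>y. y \<in> UNIV \<times> J \<Longrightarrow> f y = g y"
  shows "x \<in> UNIV \<times> J \<Longrightarrow> pd J bs f x = pd J bs g x"
proof (induction bs arbitrary: x)
  case Nil then show ?case using eq by simp
next
  case (Cons b bs)
  have "pdiff J b (pd J bs f) x = pdiff J b (pd J bs g) x \<and> (pdiffable J b (pd J bs f) x \<longleftrightarrow> pdiffable J b (pd J bs g) x)"
    by (rule pdiff_cong[OF Cons.IH Cons.prems])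
  then show ?case by simp
qed

lemma Cka_cong:
  assumes C: "Cka a k J f" and eq: "\<And>y. y \<in> UNIV \<times> J \<Longrightarrow> f y = g y"
  shows "Cka a k J g"
proof -
  have pe: "\<And>(bs::bool list) y. y \<in> UNIV \<times> J \<Longrightarrow> pd J bs f y = pd J bs g y" using pd_cong[OF eq] by simp
  show ?thesis
    unfolding Cka_def
  proof (intro conjI allI impI)
    fix bs :: "bool list" and b and x :: "real \<times> real" assume "length bs < k" "x \<in> UNIV \<times> J"
    moreover have "pdiff J b (pd J bs f) x = pdiff J b (pd J bs g) x \<and> (pdiffable J b (pd J bs f) x \<longleftrightarrow> pdiffable J b (pd J bs g) x)"
      by (rule pdiff_cong[OF pe \<open>x \<in> UNIV \<times> J\<close>])
    ultimately show "pdiffable J b (pd J bs g) x"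
      using C unfolding Cka_def by simp
  next
    fix bs :: "bool list" assume "length bs \<le> k"
    then have "continuous_on (UNIV \<times> J) (pd J bs f)" using C unfolding Cka_def by blast
    then show "continuous_on (UNIV \<times> J) (pd J bs g)" by (rule continuous_on_eq) (simp add: pe)
  next
    fix bs :: "bool list" assume "length bs = k"
    then have "holder_on a (UNIV \<times> J) (pd J bs f)" using C unfolding Cka_def by blast
    then obtain c where c: "\<forall>x\<in>UNIV \<times> J. \<forall>y\<in>UNIV \<times> J. \<bar>pd J bs f x - pd J bs f y\<bar> \<le> c * dist x y powr a"
      unfolding holder_on_def by blast
    show "holder_on a (UNIV \<times> J) (pd J bs g)" unfolding holder_on_def
      by (rule exI[of _ c]) (use c pe in simp)
  qed
qed

lemma pdiff_prod:
  assumes du: "(u has_real_derivative u') (at (fst x))"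
    and dv: "(v has_real_derivative v') (at (snd x))"
    and nb: "at (snd x) within J \<noteq> bot"
    and eq: "\<And>y. y \<in> UNIV \<times> J \<Longrightarrow> f y = u (fst y) * v (snd y)"
    and x: "x \<in> UNIV \<times> J"
  shows "pdiff J b f x = (if b then u' * v (snd x) else u (fst x) * v') \<and> pdiffable J b f x"
proof (cases b)
  case True
  have "(\<lambda>t. f (t, snd x)) = (\<lambda>t. u t * v (snd x))" using eq x by (auto simp: mem_Times_iff)
  moreover have "((\<lambda>t. u t * v (snd x)) has_real_derivative u' * v (snd x)) (at (fst x))"
    using DERIV_cmult_right[OF du] .
  ultimately show ?thesis using True
    by (auto simp: pdiff_def pdiffable_def DERIV_imp_deriv real_differentiable_def)
next
  case False
  have sJ: "snd x \<in> J" using x by (auto simp: mem_Times_iff)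
  have d1: "((\<lambda>t. u (fst x) * v t) has_real_derivative u (fst x) * v') (at (snd x) within J)"
    using has_field_derivative_at_within[OF DERIV_cmult[OF dv]] .
  have d2: "((\<lambda>t. f (fst x, t)) has_real_derivative u (fst x) * v') (at (snd x) within J)"
    by (rule has_field_derivative_transform_within[OF d1 zero_less_one sJ]) (use eq in auto)
  then have "vector_derivative (\<lambda>t. f (fst x, t)) (at (snd x) within J) = u (fst x) * v'"
    using vector_derivative_within[OF nb] by (simp add: has_real_derivative_iff_has_vector_derivative)
  then show ?thesis using False d2 by (auto simp: pdiff_def pdiffable_def real_differentiable_def)
qed

definition cnt :: "bool \<Rightarrow> bool list \<Rightarrow> nat" where
  "cnt b bs = length (filter (\<lambda>c. c = b) bs)"

lemma pd_prod:
  assumes du: "\<And>n x. (u n has_real_derivative u (Suc n) x) (at x)"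
    and dv: "\<And>n x. (v n has_real_derivative v (Suc n) x) (at x)"
    and nb: "\<And>p. p \<in> J \<Longrightarrow> at p within J \<noteq> bot"
    and eq: "\<And>y. y \<in> UNIV \<times> J \<Longrightarrow> f y = u 0 (fst y) * v 0 (snd y)"
  shows "\<forall>x \<in> UNIV \<times> J. pd J bs f x = u (cnt True bs) (fst x) * v (cnt False bs) (snd x)"
proof (induction bs)
  case Nil then show ?case using eq by (simp add: cnt_def)
next
  case (Cons b bs)
  show ?case
  proof
    fix x :: "real \<times> real" assume x: "x \<in> UNIV \<times> J"
    have nbx: "at (snd x) within J \<noteq> bot" using nb x by (auto simp: mem_Times_iff)
    show "pd J (b # bs) f x = u (cnt True (b # bs)) (fst x) * v (cnt False (b # bs)) (snd x)"
      using pdiff_prod[OF du dv nbx _ x, where f="pd J bs f" and b=b] Cons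
      by (cases b) (auto simp: cnt_def)
  qed
qed

lemma pd_prod_diffable:
  assumes du: "\<And>n x. (u n has_real_derivative u (Suc n) x) (at x)"
    and dv: "\<And>n x. (v n has_real_derivative v (Suc n) x) (at x)"
    and nb: "\<And>p. p \<in> J \<Longrightarrow> at p within J \<noteq> bot"
    and eq: "\<And>y. y \<in> UNIV \<times> J \<Longrightarrow> f y = u 0 (fst y) * v 0 (snd y)"
    and x: "x \<in> UNIV \<times> J"
  shows "pdiffable J b (pd J bs f) x"
proof -
  have nbx: "at (snd x) within J \<noteq> bot" using nb x by (auto simp: mem_Times_iff)
  show ?thesis using pdiff_prod[OF du dv nbx _ x, where f="pd J bs f" and b=b] pd_prod[OF du dv nb eq, of bs] by blast
qed

lemma holder_prod:
  fixes U V :: "real \<Rightarrow> real"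
  assumes M1: "\<And>x. \<bar>U x\<bar> \<le> M1" and L1: "\<And>x y. \<bar>U x - U y\<bar> \<le> L1 * \<bar>x - y\<bar>"
    and M2: "\<And>x. x \<in> J \<Longrightarrow> \<bar>V x\<bar> \<le> M2"
    and L2: "\<And>x y. x \<in> J \<Longrightarrow> y \<in> J \<Longrightarrow> \<bar>V x - V y\<bar> \<le> L2 * \<bar>x - y\<bar>"
    and L10: "L1 \<ge> 0" and L20: "L2 \<ge> 0" and a: "0 < a" "a \<le> 1"
  shows "holder_on a (UNIV \<times> J) (\<lambda>x. U (fst x) * V (snd x))"
proof (rule holder_lip[OF _ _ a, where M="M1 * M2" and L="\<bar>M1\<bar> * L2 + \<bar>M2\<bar> * L1"])
  fix x :: "real \<times> real" assume x: "x \<in> UNIV \<times> J"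
  then have sx: "snd x \<in> J" by (auto simp: mem_Times_iff)
  have "\<bar>U (fst x) * V (snd x)\<bar> = \<bar>U (fst x)\<bar> * \<bar>V (snd x)\<bar>" by (simp add: abs_mult)
  also have "\<dots> \<le> M1 * M2" using M1[of "fst x"] M2[OF sx] by (intro mult_mono) auto
  finally show "\<bar>U (fst x) * V (snd x)\<bar> \<le> M1 * M2" .
next
  fix x y :: "real \<times> real" assume x: "x \<in> UNIV \<times> J" and y: "y \<in> UNIV \<times> J"
  then have sx: "snd x \<in> J" and sy: "snd y \<in> J" by (auto simp: mem_Times_iff)
  have e: "U (fst x) * V (snd x) - U (fst y) * V (snd y) =
      U (fst x) * (V (snd x) - V (snd y)) + V (snd y) * (U (fst x) - U (fst y))"
    by (simp add: algebra_simps)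
  have t1: "\<bar>U (fst x) * (V (snd x) - V (snd y))\<bar> \<le> \<bar>M1\<bar> * (L2 * dist x y)"
  proof -
    have "\<bar>U (fst x) * (V (snd x) - V (snd y))\<bar> = \<bar>U (fst x)\<bar> * \<bar>V (snd x) - V (snd y)\<bar>" by (simp add: abs_mult)
    also have "\<dots> \<le> \<bar>M1\<bar> * (L2 * dist x y)"
    proof (rule mult_mono)
      show "\<bar>U (fst x)\<bar> \<le> \<bar>M1\<bar>" using M1[of "fst x"] by linarith
      have "\<bar>snd x - snd y\<bar> \<le> dist x y" using dist_snd_le[of x y] by (simp add: dist_real_def)
      then show "\<bar>V (snd x) - V (snd y)\<bar> \<le> L2 * dist x y"
        using L2[OF sx sy] L20 by (meson mult_left_mono order_trans)
    qed auto
    finally show ?thesis .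
  qed
  have t2: "\<bar>V (snd y) * (U (fst x) - U (fst y))\<bar> \<le> \<bar>M2\<bar> * (L1 * dist x y)"
  proof -
    have "\<bar>V (snd y) * (U (fst x) - U (fst y))\<bar> = \<bar>V (snd y)\<bar> * \<bar>U (fst x) - U (fst y)\<bar>" by (simp add: abs_mult)
    also have "\<dots> \<le> \<bar>M2\<bar> * (L1 * dist x y)"
    proof (rule mult_mono)
      show "\<bar>V (snd y)\<bar> \<le> \<bar>M2\<bar>" using M2[OF sy] by linarith
      have "\<bar>fst x - fst y\<bar> \<le> dist x y" using dist_fst_le[of x y] by (simp add: dist_real_def)
      then show "\<bar>U (fst x) - U (fst y)\<bar> \<le> L1 * dist x y"
        using L1[of "fst x" "fst y"] L10 by (meson mult_left_mono order_trans)
    qed auto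
    finally show ?thesis .
  qed
  have "\<bar>U (fst x) * V (snd x) - U (fst y) * V (snd y)\<bar> \<le>
      \<bar>U (fst x) * (V (snd x) - V (snd y))\<bar> + \<bar>V (snd y) * (U (fst x) - U (fst y))\<bar>"
    unfolding e by (rule abs_triangle_ineq)
  also have "\<dots> \<le> \<bar>M1\<bar> * (L2 * dist x y) + \<bar>M2\<bar> * (L1 * dist x y)" using t1 t2 by linarith
  finally show "\<bar>U (fst x) * V (snd x) - U (fst y) * V (snd y)\<bar> \<le> (\<bar>M1\<bar> * L2 + \<bar>M2\<bar> * L1) * dist x y"
    by (simp add: algebra_simps)
next
  show "0 \<le> \<bar>M1\<bar> * L2 + \<bar>M2\<bar> * L1" using L10 L20 by simp
qed

lemma cont_bound_Icc:
  fixes f :: "real \<Rightarrow> real"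
  assumes "continuous_on {A..B} f"
  shows "\<exists>M. \<forall>x\<in>{A..B}. \<bar>f x\<bar> \<le> M"
proof -
  have "bounded (f ` {A..B})" by (rule compact_imp_bounded[OF compact_continuous_image[OF assms compact_Icc]])
  then show ?thesis unfolding bounded_iff by auto
qed

lemma Cka_prod:
  assumes du: "\<And>n x. (u n has_real_derivative u (Suc n) x) (at x)"
    and dv: "\<And>n x. (v n has_real_derivative v (Suc n) x) (at x)"
    and ub: "\<And>n x. \<bar>u n x\<bar> \<le> Mu"
    and nb: "\<And>p. p \<in> J \<Longrightarrow> at p within J \<noteq> bot"
    and JAB: "J \<subseteq> {A..B}"
    and eq: "\<And>y. y \<in> UNIV \<times> J \<Longrightarrow> f y = u 0 (fst y) * v 0 (snd y)"
    and a: "0 < a" "a \<le> 1"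
  shows "Cka a k J f"
proof -
  have cu: "continuous_on UNIV (u m)" for m
    using du by (metis DERIV_isCont continuous_at_imp_continuous_on)
  have cv: "continuous_on UNIV (v m)" for m
    using dv by (metis DERIV_isCont continuous_at_imp_continuous_on)
  have cprod: "continuous_on (UNIV \<times> J) (\<lambda>x. u m (fst x) * v n (snd x))" for m n
  proof -
    have "continuous_on (UNIV \<times> J) (\<lambda>x. u m (fst x))"
      by (rule continuous_on_compose2[OF cu continuous_on_fst[OF continuous_on_id]]) auto
    moreover have "continuous_on (UNIV \<times> J) (\<lambda>x. v n (snd x))"
      by (rule continuous_on_compose2[OF cv continuous_on_snd[OF continuous_on_id]]) auto
    ultimately show ?thesis by (rule continuous_on_mult)
  qed
  have hprod: "holder_on a (UNIV \<times> J) (\<lambda>x. u m (fst x) * v n (snd x))" for m n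
  proof -
    obtain M2 where M2: "\<forall>x\<in>{A..B}. \<bar>v n x\<bar> \<le> M2"
      using cont_bound_Icc[OF continuous_on_subset[OF cv subset_UNIV]] by blast
    obtain L2 where L2: "\<forall>x\<in>{A..B}. \<bar>v (Suc n) x\<bar> \<le> L2"
      using cont_bound_Icc[OF continuous_on_subset[OF cv subset_UNIV]] by blast
    have lipv: "\<bar>v n x - v n y\<bar> \<le> L2 * \<bar>x - y\<bar>" if "x \<in> J" "y \<in> J" for x y
    proof -
      have "norm (v n x - v n y) \<le> L2 * norm (x - y)"
        by (rule field_differentiable_bound[of "{A..B}" "v n" "v (Suc n)"])
           (use that JAB L2 in \<open>auto intro: has_field_derivative_at_within[OF dv]\<close>)
      then show ?thesis by simp
    qed
    have lipu: "\<bar>u m x - u m y\<bar> \<le> Mu * \<bar>x - y\<bar>" for x y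
    proof -
      have "norm (u m x - u m y) \<le> Mu * norm (x - y)"
        by (rule field_differentiable_bound[of UNIV "u m" "u (Suc m)"]) (use du ub in auto)
      then show ?thesis by simp
    qed
    have Mu0: "Mu \<ge> 0" using ub[of m 0] by linarith
    show ?thesis
    proof (cases "J = {}")
      case True then show ?thesis by (simp add: holder_on_def)
    next
      case False
      then obtain p where "p \<in> J" by auto
      then have L20: "L2 \<ge> 0" using L2 JAB by force
      show ?thesis
        by (rule holder_prod[OF ub lipu _ lipv Mu0 L20 a]) (use M2 JAB in auto)
    qed
  qed
  have pdv: "\<forall>x \<in> UNIV \<times> J. pd J bs f x = u (cnt True bs) (fst x) * v (cnt False bs) (snd x)" for bs
    by (rule pd_prod[OF du dv nb eq])
  show ?thesis
    unfolding Cka_def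
  proof (intro conjI allI impI)
    fix bs :: "bool list" and b and x :: "real \<times> real" assume "length bs < k" "x \<in> UNIV \<times> J"
    then show "pdiffable J b (pd J bs f) x" by (intro pd_prod_diffable[OF du dv nb eq]) auto
  next
    fix bs :: "bool list"
    show "continuous_on (UNIV \<times> J) (pd J bs f)"
      by (rule continuous_on_eq[OF cprod]) (use pdv in auto)
  next
    fix bs :: "bool list"
    obtain c where c: "\<forall>x\<in>UNIV \<times> J. \<forall>y\<in>UNIV \<times> J.
        \<bar>u (cnt True bs) (fst x) * v (cnt False bs) (snd x) - u (cnt True bs) (fst y) * v (cnt False bs) (snd y)\<bar> \<le> c * dist x y powr a"
      using hprod unfolding holder_on_def by blast
    show "holder_on a (UNIV \<times> J) (pd J bs f)" unfolding holder_on_def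
      by (rule exI[of _ c]) (use c pdv in simp)
  qed
qed

definition cs :: "real \<Rightarrow> nat \<Rightarrow> real \<Rightarrow> real" where
  "cs A n x = A * cos (x + real n * (pi/2))"
definition hy :: "nat \<Rightarrow> real \<Rightarrow> real" where
  "hy n x = (if even n then sinh x else cosh x)"
definition vf :: "real \<Rightarrow> real \<Rightarrow> real \<Rightarrow> nat \<Rightarrow> real \<Rightarrow> real" where
  "vf k b C n p = C * k^n * hy n (k * (p - b))"

lemma cs_deriv: "(cs A n has_real_derivative cs A (Suc n) x) (at x)"
proof -
  have "(cs A n has_real_derivative A * (- sin (x + real n * (pi/2)) * 1)) (at x)"
    unfolding cs_def by (intro DERIV_cmult DERIV_chain2[OF DERIV_cos]) (auto intro!: derivative_eq_intros)
  moreover have e: "x + real (Suc n) * (pi/2) = (x + real n * (pi/2)) + pi/2" by (simp add: algebra_simps)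
  have "cos ((x + real n * (pi/2)) + pi/2) = - sin (x + real n * (pi/2))"
    by (simp only: cos_add cos_pi_half sin_pi_half)
  then have "cos (x + real (Suc n) * (pi/2)) = - sin (x + real n * (pi/2))" by (simp only: e)
  ultimately show ?thesis by (simp add: cs_def)
qed

lemma cs_bound: "\<bar>cs A n x\<bar> \<le> \<bar>A\<bar>"
  unfolding cs_def abs_mult using abs_cos_le_one[of "x + real n * (pi/2)"]
  by (simp add: mult_left_le)

lemma cs0: "cs A 0 x = A * cos x" by (simp add: cs_def)
lemma cs2: "cs A 2 x = - A * cos x"
proof -
  have "x + real 2 * (pi/2) = x + pi" by simp
  then show ?thesis by (simp add: cs_def cos_periodic_pi)
qed

lemma hy_deriv: "(hy n has_real_derivative hy (Suc n) x) (at x)"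
  using has_field_derivative_sinh[OF DERIV_ident, of x UNIV] has_field_derivative_cosh[OF DERIV_ident, of x UNIV]
  unfolding hy_def by (cases "even n") auto

lemma vf_deriv: "(vf k b C n has_real_derivative vf k b C (Suc n) p) (at p)"
proof -
  have "((\<lambda>p. hy n (k*(p-b))) has_real_derivative hy (Suc n) (k*(p-b)) * (k * 1)) (at p)"
    by (rule DERIV_chain2[OF hy_deriv]) (auto intro!: derivative_eq_intros)
  then have "((\<lambda>p. C * k^n * hy n (k*(p-b))) has_real_derivative C * k^n * (hy (Suc n) (k*(p-b)) * (k * 1))) (at p)"
    by (rule DERIV_cmult)
  then show ?thesis unfolding vf_def by (simp add: algebra_simps)
qed

lemma vf0: "vf k b C 0 p = C * sinh (k * (p - b))" by (simp add: vf_def hy_def)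
lemma vf1: "vf k b C 1 p = C * k * cosh (k * (p - b))" by (simp add: vf_def hy_def)
lemma vf2: "vf k b C 2 p = k^2 * vf k b C 0 p" by (simp add: vf_def hy_def)

lemma nb_Ioc: "(a::real) < b \<Longrightarrow> p \<in> {a<..b} \<Longrightarrow> at p within {a<..b} \<noteq> bot"
  using trivial_limit_within[of p "{a<..b}"] islimpt_Ioc[of a b p] by auto
lemma nb_Ico: "(a::real) < b \<Longrightarrow> p \<in> {a..<b} \<Longrightarrow> at p within {a..<b} \<noteq> bot"
  using trivial_limit_within[of p "{a..<b}"] islimpt_Ico[of a b p] by auto
lemma nb_Icc: "(a::real) < b \<Longrightarrow> p \<in> {a..b} \<Longrightarrow> at p within {a..b} \<noteq> bot"
  using trivial_limit_within[of p "{a..b}"] islimpt_Icc[of a b p] by auto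

lemma lip_Icc:
  fixes f :: "nat \<Rightarrow> real \<Rightarrow> real"
  assumes d: "\<And>x. (f n has_real_derivative f (Suc n) x) (at x)"
    and c: "continuous_on UNIV (f (Suc n))"
  shows "\<exists>L\<ge>0. \<forall>x\<in>{A..B}. \<forall>y\<in>{A..B}. \<bar>f n x - f n y\<bar> \<le> L * \<bar>x - y\<bar>"
proof -
  obtain L where L: "\<forall>x\<in>{A..B}. \<bar>f (Suc n) x\<bar> \<le> L"
    using cont_bound_Icc[OF continuous_on_subset[OF c subset_UNIV]] by blast
  have Lz: "\<And>z. z \<in> {A..B} \<Longrightarrow> norm (f (Suc n) z) \<le> \<bar>L\<bar>"
    using L by force
  have "\<bar>f n x - f n y\<bar> \<le> \<bar>L\<bar> * \<bar>x - y\<bar>" if "x \<in> {A..B}" "y \<in> {A..B}" for x y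
  proof -
    have "norm (f n x - f n y) \<le> \<bar>L\<bar> * norm (x - y)"
      by (rule field_differentiable_bound[of "{A..B}" "f n" "f (Suc n)"])
         (use that Lz in \<open>auto intro: has_field_derivative_at_within[OF d]\<close>)
    then show ?thesis by simp
  qed
  then show ?thesis by (intro exI[of _ "\<bar>L\<bar>"]) auto
qed

lemma lip_glue:
  fixes W :: "real \<Rightarrow> real"
  assumes L1: "\<forall>x\<in>{A..M}. \<forall>y\<in>{A..M}. \<bar>W x - W y\<bar> \<le> L * \<bar>x - y\<bar>"
    and L2: "\<forall>x\<in>{M..B}. \<forall>y\<in>{M..B}. \<bar>W x - W y\<bar> \<le> L * \<bar>x - y\<bar>"
    and x: "x \<in> {A..B}" and y: "y \<in> {A..B}"
  shows "\<bar>W x - W y\<bar> \<le> L * \<bar>x - y\<bar>"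
proof -
  have g: "\<bar>W u - W v\<bar> \<le> L * \<bar>u - v\<bar>" if "u \<le> M" "M \<le> v" "u \<in> {A..B}" "v \<in> {A..B}" for u v
  proof -
    have "\<bar>W u - W v\<bar> \<le> \<bar>W u - W M\<bar> + \<bar>W M - W v\<bar>" by linarith
    also have "\<dots> \<le> L * \<bar>u - M\<bar> + L * \<bar>M - v\<bar>"
      using L1[rule_format, of u M] L2[rule_format, of M v] that by auto
    also have "\<dots> = L * \<bar>u - v\<bar>" using that by (simp add: algebra_simps abs_if)
    finally show ?thesis .
  qed
  consider "x \<le> M" "y \<le> M" | "M \<le> x" "M \<le> y" | "x \<le> M" "M \<le> y" | "M \<le> x" "y \<le> M" by linarith
  then show ?thesis
  proof cases
    case 1 then show ?thesis using L1 x y by auto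
  next
    case 2 then show ?thesis using L2 x y by auto
  next
    case 3 then show ?thesis using g x y by auto
  next
    case 4 then show ?thesis using g[of y x] x y by (simp add: abs_minus_commute)
  qed
qed

lemma lip_cont:
  fixes W :: "real \<Rightarrow> real"
  assumes "\<forall>x\<in>S. \<forall>y\<in>S. \<bar>W x - W y\<bar> \<le> L * \<bar>x - y\<bar>" "L \<ge> 0"
  shows "continuous_on S W"
  by (rule lipschitz_on_continuous_on[of L]) (use assms in \<open>auto intro!: lipschitz_onI simp: dist_real_def\<close>)

definition V1 :: "real \<Rightarrow> real \<Rightarrow> nat \<Rightarrow> real \<Rightarrow> real" where
  "V1 Gam p1 = vf (1/Gam) 0 (1/sinh(p1/Gam))"
definition V2 :: "real \<Rightarrow> real \<Rightarrow> real \<Rightarrow> nat \<Rightarrow> real \<Rightarrow> real" where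
  "V2 lam p0 p1 = vf (1/lam) p0 (1/sinh((p1-p0)/lam))"
definition Wf :: "real \<Rightarrow> real \<Rightarrow> real \<Rightarrow> real \<Rightarrow> real \<Rightarrow> real" where
  "Wf Gam lam p0 p1 p = (if p1 \<le> p then V1 Gam p1 0 p else V2 lam p0 p1 0 p)"
definition psi0 :: "real \<Rightarrow> real \<Rightarrow> real \<Rightarrow> real \<Rightarrow> real \<times> real \<Rightarrow> real" where
  "psi0 Gam lam p0 p1 x = cs 1 0 (fst x) * Wf Gam lam p0 p1 (snd x)"

lemma V1_deriv: "(V1 Gam p1 n has_real_derivative V1 Gam p1 (Suc n) x) (at x)"
  unfolding V1_def by (rule vf_deriv)
lemma V2_deriv: "(V2 lam p0 p1 n has_real_derivative V2 lam p0 p1 (Suc n) x) (at x)"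
  unfolding V2_def by (rule vf_deriv)
lemma V1_2: "V1 Gam p1 2 p = (1/Gam)^2 * V1 Gam p1 0 p" unfolding V1_def by (rule vf2)
lemma V2_2: "V2 lam p0 p1 2 p = (1/lam)^2 * V2 lam p0 p1 0 p" unfolding V2_def by (rule vf2)
lemma V1_0: "V1 Gam p1 0 0 = 0" unfolding V1_def by (simp add: vf0)
lemma V2_0: "V2 lam p0 p1 0 p0 = 0" unfolding V2_def by (simp add: vf0)

lemma integral_cos0: "integral {-pi..pi} cos = 0"
proof -
  have "(cos has_integral sin pi - sin (-pi)) {-pi..pi}"
    by (rule fundamental_theorem_of_calculus)
       (auto simp: has_real_derivative_iff_has_vector_derivative[symmetric] intro!: has_field_derivative_at_within DERIV_sin[of _, THEN DERIV_cong])
  then show ?thesis by (simp add: integral_unique)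
qed

context
  fixes Gam lam p0 p1 :: real
  assumes Gp: "Gam > 0" and lp: "lam > 0" and p01: "p0 < p1" and p1n: "p1 < 0"
begin

lemma s1: "sinh (p1/Gam) < 0" using Gp p1n by (simp add: divide_neg_pos)
lemma s2: "sinh ((p1-p0)/lam) > 0" using lp p01 by simp

lemma V1_p1: "V1 Gam p1 0 p1 = 1" using s1 Gp p1n unfolding V1_def by (simp add: vf0)
lemma V2_p1: "V2 lam p0 p1 0 p1 = 1" using s2 lp p01 unfolding V2_def by (simp add: vf0)
lemma V1_1: "V1 Gam p1 1 p1 = coth (p1/Gam) / Gam" unfolding V1_def coth_def by (simp add: vf_def hy_def)
lemma V2_1: "V2 lam p0 p1 1 p1 = coth ((p1-p0)/lam) / lam" unfolding V2_def coth_def by (simp add: vf_def hy_def)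

lemma psi0_La: "y \<in> UNIV \<times> {p1..0} \<Longrightarrow> psi0 Gam lam p0 p1 y = cs 1 0 (fst y) * V1 Gam p1 0 (snd y)"
  by (auto simp: psi0_def Wf_def mem_Times_iff)
lemma psi0_La': "y \<in> UNIV \<times> {p1<..0} \<Longrightarrow> psi0 Gam lam p0 p1 y = cs 1 0 (fst y) * V1 Gam p1 0 (snd y)"
  by (auto simp: psi0_def Wf_def mem_Times_iff)
lemma psi0_Lb: "y \<in> UNIV \<times> {p0..p1} \<Longrightarrow> psi0 Gam lam p0 p1 y = cs 1 0 (fst y) * V2 lam p0 p1 0 (snd y)"
  using V1_p1 V2_p1 by (auto simp: psi0_def Wf_def mem_Times_iff)
lemma psi0_Lb': "y \<in> UNIV \<times> {p0..<p1} \<Longrightarrow> psi0 Gam lam p0 p1 y = cs 1 0 (fst y) * V2 lam p0 p1 0 (snd y)"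
  by (auto simp: psi0_def Wf_def mem_Times_iff)

lemma cs_b: "\<bar>cs 1 n x\<bar> \<le> 1" using cs_bound[of 1 n x] by simp

lemma psi0_Xsp:
  assumes a: "0 < a" "a < 1"
  shows "Xsp a p0 p1 (psi0 Gam lam p0 p1)"
proof -
  have a1: "a \<le> 1" using a by simp
  have C1: "Cka a 2 {p1<..0} (psi0 Gam lam p0 p1)"
    by (rule Cka_prod[OF cs_deriv V1_deriv cs_b _ _ psi0_La' a(1) a1, where A=p1 and B=0])
       (use p1n nb_Ioc in auto)
  have C2: "Cka a 2 {p0..<p1} (psi0 Gam lam p0 p1)"
    by (rule Cka_prod[OF cs_deriv V2_deriv cs_b _ _ psi0_Lb' a(1) a1, where A=p0 and B=p1])
       (use p01 nb_Ico in auto)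
  have C3: "Cka a 1 {p1..0} (psi0 Gam lam p0 p1)"
    by (rule Cka_prod[OF cs_deriv V1_deriv cs_b _ _ psi0_La a(1) a1, where A=p1 and B=0])
       (use p1n nb_Icc in auto)
  have C4: "Cka a 1 {p0..p1} (psi0 Gam lam p0 p1)"
    by (rule Cka_prod[OF cs_deriv V2_deriv cs_b _ _ psi0_Lb a(1) a1, where A=p0 and B=p1])
       (use p01 nb_Icc in auto)
  obtain La where La: "La \<ge> 0" "\<forall>x\<in>{p1..0}. \<forall>y\<in>{p1..0}. \<bar>V1 Gam p1 0 x - V1 Gam p1 0 y\<bar> \<le> La * \<bar>x - y\<bar>"
    using lip_Icc[of "V1 Gam p1" 0, OF V1_deriv] V1_deriv
    by (metis DERIV_isCont continuous_at_imp_continuous_on)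
  obtain Lb where Lb: "Lb \<ge> 0" "\<forall>x\<in>{p0..p1}. \<forall>y\<in>{p0..p1}. \<bar>V2 lam p0 p1 0 x - V2 lam p0 p1 0 y\<bar> \<le> Lb * \<bar>x - y\<bar>"
    using lip_Icc[of "V2 lam p0 p1" 0, OF V2_deriv] V2_deriv
    by (metis DERIV_isCont continuous_at_imp_continuous_on)
  let ?W = "Wf Gam lam p0 p1"
  let ?L = "max La Lb"
  have W1: "\<forall>x\<in>{p1..0}. \<forall>y\<in>{p1..0}. \<bar>?W x - ?W y\<bar> \<le> ?L * \<bar>x - y\<bar>"
  proof (intro ballI)
    fix x y assume "x \<in> {p1..0}" "y \<in> {p1..0}"
    then have "\<bar>?W x - ?W y\<bar> \<le> La * \<bar>x - y\<bar>" using La by (auto simp: Wf_def)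
    also have "\<dots> \<le> ?L * \<bar>x - y\<bar>" by (intro mult_right_mono) auto
    finally show "\<bar>?W x - ?W y\<bar> \<le> ?L * \<bar>x - y\<bar>" .
  qed
  have W2: "\<forall>x\<in>{p0..p1}. \<forall>y\<in>{p0..p1}. \<bar>?W x - ?W y\<bar> \<le> ?L * \<bar>x - y\<bar>"
  proof (intro ballI)
    fix x y assume xy: "x \<in> {p0..p1}" "y \<in> {p0..p1}"
    have e: "\<And>z. z \<in> {p0..p1} \<Longrightarrow> ?W z = V2 lam p0 p1 0 z" using V1_p1 V2_p1 by (auto simp: Wf_def)
    have "\<bar>?W x - ?W y\<bar> \<le> Lb * \<bar>x - y\<bar>" using Lb xy by (simp add: e)
    also have "\<dots> \<le> ?L * \<bar>x - y\<bar>" by (intro mult_right_mono) auto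
    finally show "\<bar>?W x - ?W y\<bar> \<le> ?L * \<bar>x - y\<bar>" .
  qed
  have WL: "\<forall>x\<in>{p0..0}. \<forall>y\<in>{p0..0}. \<bar>?W x - ?W y\<bar> \<le> ?L * \<bar>x - y\<bar>"
    using lip_glue[OF W2 W1] by blast
  have Wc: "continuous_on {p0..0} ?W" by (rule lip_cont[OF WL]) (use La in auto)
  obtain MW where MW: "\<forall>x\<in>{p0..0}. \<bar>?W x\<bar> \<le> MW" using cont_bound_Icc[OF Wc] by blast
  have cs0c: "continuous_on UNIV (cs 1 0)" using cs_deriv by (metis DERIV_isCont continuous_at_imp_continuous_on)
  have lipcs: "\<bar>cs 1 0 x - cs 1 0 y\<bar> \<le> 1 * \<bar>x - y\<bar>" for x y
  proof -
    have "norm (cs 1 0 x - cs 1 0 y) \<le> 1 * norm (x - y)"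
      by (rule field_differentiable_bound[of UNIV "cs 1 0" "cs 1 (Suc 0)"]) (use cs_deriv cs_b in auto)
    then show ?thesis by simp
  qed
  have MW': "\<And>x. x \<in> {p0..0} \<Longrightarrow> \<bar>?W x\<bar> \<le> MW" using MW by blast
  have WL': "\<And>x y. x \<in> {p0..0} \<Longrightarrow> y \<in> {p0..0} \<Longrightarrow> \<bar>?W x - ?W y\<bar> \<le> ?L * \<bar>x - y\<bar>" using WL by blast
  have L0: "?L \<ge> 0" using La by simp
  have C0: "Cka a 0 {p0..0} (psi0 Gam lam p0 p1)"
    unfolding Cka_def
  proof (intro conjI allI impI)
    fix bs :: "bool list" assume "length bs \<le> 0"
    then have bs: "bs = []" by simp
    have "continuous_on (UNIV \<times> {p0..0}) (\<lambda>x. cs 1 0 (fst x) * ?W (snd x))"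
    proof (rule continuous_on_mult)
      show "continuous_on (UNIV \<times> {p0..0}) (\<lambda>x. cs 1 0 (fst x))"
        by (rule continuous_on_compose2[OF cs0c continuous_on_fst[OF continuous_on_id]]) auto
      show "continuous_on (UNIV \<times> {p0..0}) (\<lambda>x. ?W (snd x))"
        by (rule continuous_on_compose2[OF Wc continuous_on_snd[OF continuous_on_id]]) (auto simp: mem_Times_iff)
    qed
    then show "continuous_on (UNIV \<times> {p0..0}) (pd {p0..0} bs (psi0 Gam lam p0 p1))"
      using bs by (simp add: psi0_def[abs_def])
  next
    fix bs :: "bool list" assume "length bs = 0"
    then have bs: "bs = []" by simp
    have "holder_on a (UNIV \<times> {p0..0}) (\<lambda>x. cs 1 0 (fst x) * ?W (snd x))"
      using holder_prod[where J="{p0..0}", OF cs_b lipcs MW' WL' _ L0 a(1) a1] by simp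
    then show "holder_on a (UNIV \<times> {p0..0}) (pd {p0..0} bs (psi0 Gam lam p0 p1))"
      using bs by (simp add: psi0_def[abs_def])
  qed simp
  have PE: "per_even {p0..0} (psi0 Gam lam p0 p1)"
    unfolding per_even_def psi0_def by (simp add: cs0)
  have Z: "\<forall>q. psi0 Gam lam p0 p1 (q, p0) = 0"
    using p01 V2_0 by (simp add: psi0_def Wf_def)
  show ?thesis unfolding Xsp_def using PE C1 C2 C0 C3 C4 Z by blast
qed

end

lemma cnt_simps [simp]: "cnt b [] = 0" "cnt b (c # cs') = (if c = b then Suc (cnt b cs') else cnt b cs')"
  by (auto simp: cnt_def)

context
  fixes Gam lam p0 p1 :: real
  assumes Gp: "Gam > 0" and lp: "lam > 0" and p01: "p0 < p1" and p1n: "p1 < 0"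
begin

lemma pdA: "\<forall>x\<in>UNIV \<times> {p1<..0}. pd {p1<..0} bs (psi0 Gam lam p0 p1) x = cs 1 (cnt True bs) (fst x) * V1 Gam p1 (cnt False bs) (snd x)"
  by (rule pd_prod[OF cs_deriv V1_deriv nb_Ioc[OF p1n] psi0_La'[OF Gp lp p01 p1n]])
lemma pdB: "\<forall>x\<in>UNIV \<times> {p0..<p1}. pd {p0..<p1} bs (psi0 Gam lam p0 p1) x = cs 1 (cnt True bs) (fst x) * V2 lam p0 p1 (cnt False bs) (snd x)"
  by (rule pd_prod[OF cs_deriv V2_deriv nb_Ico[OF p01] psi0_Lb'[OF Gp lp p01 p1n]])
lemma pdC: "\<forall>x\<in>UNIV \<times> {p1..0}. pd {p1..0} bs (psi0 Gam lam p0 p1) x = cs 1 (cnt True bs) (fst x) * V1 Gam p1 (cnt False bs) (snd x)"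
  by (rule pd_prod[OF cs_deriv V1_deriv nb_Icc[OF p1n] psi0_La[OF Gp lp p01 p1n]])
lemma pdD: "\<forall>x\<in>UNIV \<times> {p0..p1}. pd {p0..p1} bs (psi0 Gam lam p0 p1) x = cs 1 (cnt True bs) (fst x) * V2 lam p0 p1 (cnt False bs) (snd x)"
  by (rule pd_prod[OF cs_deriv V2_deriv nb_Icc[OF p01] psi0_Lb[OF Gp lp p01 p1n]])

lemma psi0_ker:
  assumes disp: "g * jrho = Gam^2 * coth (p1 / Gam) - lam^2 * coth ((p1 - p0) / lam)"
  shows "eqY p0 p1 (Lop g jrho Gam p0 p1 lam (psi0 Gam lam p0 p1)) zeroY"
  unfolding eqY_def Lop_def zeroY_def fst_conv snd_conv
proof (intro conjI ballI allI)
  fix x :: "real \<times> real" assume x: "x \<in> UNIV \<times> {p1<..0}"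
  show "pd {p1<..0} [False, False] (psi0 Gam lam p0 p1) x + (1 / Gam)\<^sup>2 * pd {p1<..0} [True, True] (psi0 Gam lam p0 p1) x = 0"
    using pdA[rule_format, OF x, of "[False, False]"] pdA[rule_format, OF x, of "[True, True]"]
    by (simp add: cs0 cs2 V1_2 numeral_2_eq_2[symmetric])
next
  fix x :: "real \<times> real" assume x: "x \<in> UNIV \<times> {p0..<p1}"
  show "pd {p0..<p1} [False, False] (psi0 Gam lam p0 p1) x + (1 / lam)\<^sup>2 * pd {p0..<p1} [True, True] (psi0 Gam lam p0 p1) x = 0"
    using pdB[rule_format, OF x, of "[False, False]"] pdB[rule_format, OF x, of "[True, True]"]
    by (simp add: cs0 cs2 V2_2 numeral_2_eq_2[symmetric])
next
  fix q :: real
  have x1: "(q, p1) \<in> UNIV \<times> {p1..0}" and x2: "(q, p1) \<in> UNIV \<times> {p0..p1}" using p01 p1n by auto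
  have e1: "pd {p1..0} [False] (psi0 Gam lam p0 p1) (q, p1) = cos q * (coth (p1/Gam) / Gam)"
    using pdC[rule_format, OF x1, of "[False]"] V1_1[OF Gp lp p01 p1n] by (simp add: cs0)
  have e2: "pd {p0..p1} [False] (psi0 Gam lam p0 p1) (q, p1) = cos q * (coth ((p1-p0)/lam) / lam)"
    using pdD[rule_format, OF x2, of "[False]"] V2_1[OF Gp lp p01 p1n] by (simp add: cs0)
  have e3: "psi0 Gam lam p0 p1 (q, p1) = cos q"
    using V1_p1[OF Gp lp p01 p1n] by (simp add: psi0_def Wf_def cs0)
  have g3: "Gam ^ 3 * (coth (p1/Gam) / Gam) = Gam^2 * coth (p1/Gam)" using Gp by (simp add: power3_eq_cube power2_eq_square)
  have l3: "lam ^ 3 * (coth ((p1-p0)/lam) / lam) = lam^2 * coth ((p1-p0)/lam)" using lp by (simp add: power3_eq_cube power2_eq_square)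
  show "2 * (Gam ^ 3 * pd {p1..0} [False] (psi0 Gam lam p0 p1) (q, p1) - lam ^ 3 * pd {p0..p1} [False] (psi0 Gam lam p0 p1) (q, p1))
          - 2 * g * jrho * psi0 Gam lam p0 p1 (q, p1) = 0"
    unfolding e1 e2 e3
  proof -
    have "2 * (Gam ^ 3 * (cos q * (coth (p1/Gam) / Gam)) - lam ^ 3 * (cos q * (coth ((p1-p0)/lam) / lam))) - 2 * g * jrho * cos q
      = 2 * cos q * (Gam ^ 3 * (coth (p1/Gam) / Gam) - lam ^ 3 * (coth ((p1-p0)/lam) / lam) - g * jrho)"
      by (simp add: algebra_simps)
    also have "\<dots> = 0" unfolding g3 l3 disp by simp
    finally show "2 * (Gam ^ 3 * (cos q * (coth (p1/Gam) / Gam)) - lam ^ 3 * (cos q * (coth ((p1-p0)/lam) / lam))) - 2 * g * jrho * cos q = 0" .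
  qed
next
  fix q :: real
  have "(\<lambda>q. psi0 Gam lam p0 p1 (q, p1)) = cos"
    using V1_p1[OF Gp lp p01 p1n] by (simp add: psi0_def Wf_def cs0)
  then have "dmean p1 (psi0 Gam lam p0 p1) = 0" by (simp add: dmean_def integral_cos0)
  moreover have "psi0 Gam lam p0 p1 (q, 0) = 0" using p1n by (simp add: psi0_def Wf_def V1_0)
  ultimately show "psi0 Gam lam p0 p1 (q, 0) - dmean p1 (psi0 Gam lam p0 p1) = 0" by simp
qed

end

definition Fc :: "(real \<times> real \<Rightarrow> real) \<Rightarrow> real \<Rightarrow> real" where
  "Fc f p = integral {-pi..pi} (\<lambda>t. f (t, p) * cos t)"

lemma at_open_sub: "x \<in> {A<..<B} \<Longrightarrow> {A<..<B} \<subseteq> J \<Longrightarrow> at x within J = at (x::real)"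
  by (rule at_within_interior) (meson interior_maximal open_greaterThanLessThan subsetD)

lemma cont_line: "continuous_on (UNIV \<times> J) f \<Longrightarrow> p \<in> J \<Longrightarrow> continuous_on S (\<lambda>t. f (t, p))"
  by (rule continuous_on_compose2[of "UNIV \<times> J" f]) (auto intro!: continuous_intros)

lemma Fc_cont:
  assumes "continuous_on (UNIV \<times> J) f"
  shows "continuous_on J (Fc f)"
proof -
  have "continuous_on (J \<times> cbox (-pi) pi) (\<lambda>y. f (snd y, fst y) * cos (snd y))"
  proof (rule continuous_on_mult)
    show "continuous_on (J \<times> cbox (- pi) pi) (\<lambda>y. f (snd y, fst y))"
      by (rule continuous_on_compose2[OF assms]) (auto intro!: continuous_intros)
  qed (auto intro!: continuous_intros)
  then have "continuous_on (J \<times> cbox (-pi) pi) (\<lambda>(x, t). f (t, x) * cos t)"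
    by (simp add: split_beta)
  from integral_continuous_on_param[OF this] show ?thesis
    unfolding Fc_def by simp
qed

lemma ibp_cos:
  fixes f f1 f2 :: "real \<Rightarrow> real"
  assumes d0: "\<And>t. (f has_real_derivative f1 t) (at t)"
    and d1: "\<And>t. (f1 has_real_derivative f2 t) (at t)"
    and c2: "continuous_on {-pi..pi} f2"
    and per: "f1 pi = f1 (-pi)"
  shows "integral {-pi..pi} (\<lambda>t. f2 t * cos t) = - integral {-pi..pi} (\<lambda>t. f t * cos t)"
proof -
  define G where "G t = f1 t * cos t + f t * sin t" for t
  have "((\<lambda>t. f2 t * cos t + f t * cos t) has_integral G pi - G (-pi)) {-pi..pi}"
  proof (rule fundamental_theorem_of_calculus)
    fix t assume "t \<in> {-pi..pi}"
    have "(G has_real_derivative (f2 t * cos t + (- sin t) * f1 t) + (f1 t * sin t + cos t * f t)) (at t)"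
      unfolding G_def[abs_def] by (intro DERIV_add DERIV_mult d0 d1 DERIV_sin DERIV_cos)
    then have "(G has_real_derivative f2 t * cos t + f t * cos t) (at t)" by (simp add: algebra_simps)
    then show "(G has_vector_derivative f2 t * cos t + f t * cos t) (at t within {-pi..pi})"
      by (simp add: has_real_derivative_iff_has_vector_derivative[symmetric] has_field_derivative_at_within)
  qed simp
  moreover have "G pi - G (-pi) = 0" using per by (simp add: G_def)
  ultimately have I: "integral {-pi..pi} (\<lambda>t. f2 t * cos t + f t * cos t) = 0" by (simp add: integral_unique)
  have cf: "continuous_on UNIV f" using d0 by (metis DERIV_isCont continuous_at_imp_continuous_on)
  have i1: "(\<lambda>t. f2 t * cos t) integrable_on {-pi..pi}"
    by (rule integrable_continuous_interval) (intro continuous_on_mult c2 continuous_intros)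
  have i2: "(\<lambda>t. f t * cos t) integrable_on {-pi..pi}"
    by (rule integrable_continuous_interval)
       (intro continuous_on_mult continuous_on_subset[OF cf] continuous_intros, simp)
  show ?thesis using I integral_add[OF i1 i2] by simp
qed

lemma per_deriv:
  assumes per: "\<And>t. f (t + 2*pi) = f t" and d: "\<And>t. (f has_real_derivative f1 t) (at t)"
  shows "f1 pi = f1 (-pi)"
proof -
  have "(f has_real_derivative f1 pi) (at (-pi + 2*pi))" using d[of pi] by simp
  then have "((\<lambda>x. f (x + 2*pi)) has_real_derivative f1 pi) (at (-pi))" by (simp only: DERIV_shift)
  then have "(f has_real_derivative f1 pi) (at (-pi))" by (simp add: per)
  then show ?thesis using d[of "-pi"] DERIV_unique by blast
qed

lemma qpart:
  assumes C: "Cka a 2 J psi" and pe: "per_even {p0..0} psi" and p: "p \<in> J" "J \<subseteq> {p0..0}"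
  shows "Fc (pd J [True, True] psi) p = - Fc psi p"
proof -
  have sJ: "(t, p) \<in> UNIV \<times> J" for t using p by auto
  have d0: "((\<lambda>s. psi (s, p)) has_real_derivative pd J [True] psi (t, p)) (at t)" for t
  proof -
    have "pdiffable J True (pd J [] psi) (t, p)" using C sJ unfolding Cka_def by (metis length_0_conv zero_less_numeral)
    then show ?thesis by (simp add: pdiffable_def pdiff_def DERIV_deriv_iff_real_differentiable)
  qed
  have d1: "((\<lambda>s. pd J [True] psi (s, p)) has_real_derivative pd J [True, True] psi (t, p)) (at t)" for t
  proof -
    have "pdiffable J True (pd J [True] psi) (t, p)" using C sJ unfolding Cka_def by (metis One_nat_def length_Cons list.size(3) one_less_numeral_iff semiring_norm(76))
    then have "(\<lambda>s. pd J [True] psi (s, p)) differentiable at t" by (simp add: pdiffable_def)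
    then show ?thesis unfolding DERIV_deriv_iff_real_differentiable[symmetric]
      by (simp add: pdiff_def)
  qed
  have c2: "continuous_on {-pi..pi} (\<lambda>t. pd J [True, True] psi (t, p))"
  proof -
    have "continuous_on (UNIV \<times> J) (pd J [True, True] psi)"
      using C unfolding Cka_def by (metis length_Cons list.size(3) numeral_2_eq_2 order_refl)
    then show ?thesis by (rule cont_line[OF _ p(1)])
  qed
  have per: "(\<lambda>s. psi (s, p)) (t + 2*pi) = (\<lambda>s. psi (s, p)) t" for t using pe p unfolding per_even_def by auto
  show ?thesis unfolding Fc_def
    by (rule ibp_cos[OF d0 d1 c2 per_deriv[OF per d0]])
qed

lemma cont_swap:
  fixes f :: "real \<times> real \<Rightarrow> real"
  assumes "continuous_on (UNIV \<times> J) f" "U \<subseteq> J"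
  shows "continuous_on (U \<times> cbox (-pi) pi) (\<lambda>(x, t). f (t, x) * cos t)"
proof -
  have "continuous_on (U \<times> cbox (-pi) pi) (\<lambda>y. f (snd y, fst y) * cos (snd y))"
  proof (rule continuous_on_mult)
    show "continuous_on (U \<times> cbox (- pi) pi) (\<lambda>y. f (snd y, fst y))"
      by (rule continuous_on_compose2[OF assms(1)]) (use assms(2) in \<open>auto intro!: continuous_intros\<close>)
    show "continuous_on (U \<times> cbox (-pi) pi) (\<lambda>x. cos (snd x))"
      by (rule continuous_on_cos, rule continuous_on_snd, rule continuous_on_id)
  qed
  then show ?thesis by (simp add: split_beta)
qed

lemma Cka_pdiffable: "Cka a k J f \<Longrightarrow> length bs < k \<Longrightarrow> x \<in> UNIV \<times> J \<Longrightarrow> pdiffable J b (pd J bs f) x"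
  unfolding Cka_def by blast
lemma Cka_cont: "Cka a k J f \<Longrightarrow> length bs \<le> k \<Longrightarrow> continuous_on (UNIV \<times> J) (pd J bs f)"
  unfolding Cka_def by blast

lemma pdiffF_vd: "pdiff J False F (t, x) = vector_derivative (\<lambda>s. F (t, s)) (at x within J)"
  by (simp add: pdiff_def)
lemma pdiffableF: "pdiffable J False F (t, x) = ((\<lambda>s. F (t, s)) differentiable (at x within J))"
  by (simp add: pdiffable_def)

lemma Fc_deriv1:
  assumes C: "Cka a 1 J psi" and sub: "{A<..<B} \<subseteq> J" and x0: "x0 \<in> {A<..<B}"
  shows "(Fc psi has_real_derivative Fc (pd J [False] psi) x0) (at x0)"
proof -
  let ?U = "{A<..<B}"
  have fx: "((\<lambda>x. psi (t, x) * cos t) has_field_derivative pd J [False] psi (t, x) * cos t) (at x within ?U)"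
    if x: "x \<in> ?U" for x t
  proof -
    have xJ: "(t, x) \<in> UNIV \<times> J" using x sub by auto
    have "pdiffable J False (pd J [] psi) (t, x)" by (rule Cka_pdiffable[OF C _ xJ]) simp
    then have "(\<lambda>s. psi (t, s)) differentiable (at x within J)" by (simp add: pdiffable_def)
    then have "((\<lambda>s. psi (t, s)) has_vector_derivative pd J [False] psi (t, x)) (at x within J)"
      by (simp add: vector_derivative_works pdiff_def)
    then have "((\<lambda>s. psi (t, s)) has_real_derivative pd J [False] psi (t, x)) (at x within ?U)"
      by (simp add: has_real_derivative_iff_has_vector_derivative[symmetric])
         (rule DERIV_subset[OF _ sub])
    then show ?thesis by (rule DERIV_cmult_right)
  qed
  have int: "(\<lambda>t. psi (t, x) * cos t) integrable_on cbox (-pi) pi" if "x \<in> ?U" for x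
  proof -
    have "continuous_on (UNIV \<times> J) (pd J [] psi)" by (rule Cka_cont[OF C]) simp
    then have "continuous_on (UNIV \<times> J) psi" by simp
    then have "continuous_on (cbox (-pi) pi) (\<lambda>t. psi (t, x))" by (rule cont_line) (use that sub in auto)
    then show ?thesis by (intro integrable_continuous continuous_on_mult) (auto intro!: continuous_intros)
  qed
  have cfx: "continuous_on (?U \<times> cbox (-pi) pi) (\<lambda>(x, t). pd J [False] psi (t, x) * cos t)"
    by (rule cont_swap[OF Cka_cont[OF C] sub]) simp
  have "((\<lambda>x. integral (cbox (-pi) pi) (\<lambda>t. psi (t, x) * cos t)) has_field_derivative
          integral (cbox (-pi) pi) (\<lambda>t. pd J [False] psi (t, x0) * cos t)) (at x0 within ?U)"
    by (rule leibniz_rule_field_derivative[where f="\<lambda>x t. psi (t, x) * cos t", OF fx int cfx x0 convex_real_interval(8)])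
  then show ?thesis unfolding at_within_open[OF x0 open_greaterThanLessThan] cbox_interval Fc_def[abs_def] .
qed

lemma Fc_deriv2:
  assumes C2: "Cka a 2 J' psi" and C1: "Cka a 1 J psi"
    and sub: "{A<..<B} \<subseteq> J" and sub': "{A<..<B} \<subseteq> J'" and x0: "x0 \<in> {A<..<B}"
  shows "(Fc (pd J [False] psi) has_real_derivative Fc (pd J' [False, False] psi) x0) (at x0)"
proof -
  let ?U = "{A<..<B}"
  have eqF: "pd J [False] psi (t, s) = pd J' [False] psi (t, s)" if "s \<in> ?U" for t s
    unfolding pd.simps pdiff_def fst_conv snd_conv if_False at_open_sub[OF that sub] at_open_sub[OF that sub'] by (rule refl)
  have fx: "((\<lambda>x. pd J [False] psi (t, x) * cos t) has_field_derivative pd J' [False, False] psi (t, x) * cos t) (at x within ?U)"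
    if x: "x \<in> ?U" for x t
  proof -
    have xJ: "(t, x) \<in> UNIV \<times> J'" using x sub' by auto
    have "pdiffable J' False (pd J' [False] psi) (t, x)" by (rule Cka_pdiffable[OF C2 _ xJ]) simp
    then have "(\<lambda>s. pd J' [False] psi (t, s)) differentiable (at x within J')" by (simp only: pdiffableF)
    then have "((\<lambda>s. pd J' [False] psi (t, s)) has_vector_derivative pdiff J' False (pd J' [False] psi) (t, x)) (at x within J')"
      unfolding pdiffF_vd by (rule vector_derivative_works[THEN iffD1])
    then have "((\<lambda>s. pd J' [False] psi (t, s)) has_vector_derivative pd J' [False, False] psi (t, x)) (at x within J')"
      by (simp only: pd.simps(2)[of J' False "[False]"])
    then have "((\<lambda>s. pd J' [False] psi (t, s)) has_real_derivative pd J' [False, False] psi (t, x)) (at x within J')"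
      unfolding has_real_derivative_iff_has_vector_derivative .
    then have "((\<lambda>s. pd J' [False] psi (t, s)) has_real_derivative pd J' [False, False] psi (t, x)) (at x)"
      unfolding at_open_sub[OF x sub'] .
    then have "((\<lambda>s. pd J [False] psi (t, s)) has_real_derivative pd J' [False, False] psi (t, x)) (at x)"
      by (rule has_field_derivative_transform_within_open[OF _ open_greaterThanLessThan x]) (simp only: eqF)
    then show ?thesis by (rule has_field_derivative_at_within[OF DERIV_cmult_right])
  qed
  have int: "(\<lambda>t. pd J [False] psi (t, x) * cos t) integrable_on cbox (-pi) pi" if "x \<in> ?U" for x
  proof -
    have "continuous_on (UNIV \<times> J) (pd J [False] psi)" by (rule Cka_cont[OF C1]) simp
    then have "continuous_on (cbox (-pi) pi) (\<lambda>t. pd J [False] psi (t, x))" by (rule cont_line) (use that sub in auto)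
    then show ?thesis by (intro integrable_continuous continuous_on_mult) (auto intro!: continuous_intros)
  qed
  have cfx: "continuous_on (?U \<times> cbox (-pi) pi) (\<lambda>(x, t). pd J' [False, False] psi (t, x) * cos t)"
    by (rule cont_swap[OF Cka_cont[OF C2] sub']) simp
  have "((\<lambda>x. integral (cbox (-pi) pi) (\<lambda>t. pd J [False] psi (t, x) * cos t)) has_field_derivative
          integral (cbox (-pi) pi) (\<lambda>t. pd J' [False, False] psi (t, x0) * cos t)) (at x0 within ?U)"
    by (rule leibniz_rule_field_derivative[where f="\<lambda>x t. pd J [False] psi (t, x) * cos t", OF fx int cfx x0 convex_real_interval(8)])
  then show ?thesis unfolding at_within_open[OF x0 open_greaterThanLessThan] cbox_interval Fc_def[abs_def] .
qed

lemma integral_cos2: "integral {-pi..pi} (\<lambda>t. cos t * cos t) = pi"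
proof -
  have "((\<lambda>t. cos t * cos t) has_integral ((pi + sin pi * cos pi) / 2 - (-pi + sin (-pi) * cos (-pi)) / 2)) {-pi..pi}"
  proof (rule fundamental_theorem_of_calculus)
    fix t :: real
    have e: "sin t * sin t = 1 - cos t * cos t" using sin_cos_squared_add[of t] by (simp add: power2_eq_square)
    have "((\<lambda>t. (t + sin t * cos t) / 2) has_real_derivative cos t * cos t) (at t)"
      by (auto intro!: derivative_eq_intros simp: e algebra_simps)
    then show "((\<lambda>t. (t + sin t * cos t) / 2) has_vector_derivative cos t * cos t) (at t within {-pi..pi})"
      by (simp add: has_real_derivative_iff_has_vector_derivative[symmetric] has_field_derivative_at_within)
  qed simp
  then show ?thesis by (simp add: integral_unique)
qed

lemma deriv_const': "deriv (\<lambda>l. A) l0 = (0::real)"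
  by (rule DERIV_imp_deriv) (rule DERIV_const)

lemma deriv_comp2:
  assumes "l0 \<noteq> (0::real)"
  shows "deriv (\<lambda>l. A + (1 / l)^2 * B) l0 = -2 / l0^3 * B"
proof (rule DERIV_imp_deriv)
  show "((\<lambda>l. A + (1 / l)^2 * B) has_real_derivative -2 / l0^3 * B) (at l0)"
    using assms by (auto intro!: derivative_eq_intros simp: field_simps power3_eq_cube power2_eq_square)
qed

lemma deriv_comp3:
  shows "deriv (\<lambda>l. 2 * (G3 * X - l ^ 3 * Y) - Z) (l0::real) = -6 * l0^2 * Y"
proof (rule DERIV_imp_deriv)
  show "((\<lambda>l. 2 * (G3 * X - l ^ 3 * Y) - Z) has_real_derivative -6 * l0^2 * Y) (at l0)"
    by (auto intro!: derivative_eq_intros simp: field_simps power2_eq_square)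
qed

lemma final_alg:
  fixes h D1 D2 G L c coth1 sg C d gr :: real
  assumes G: "G > 0" and L: "L > 0" and c: "c \<noteq> 0" and sg: "sg > 0" and C: "C > 0" and d: "d > 0"
    and K1: "D1 = h * (coth1 / G)"
    and K2: "D2 = h * ((C / sg) / L) + (2 * pi / (c * L^3)) * ((1/sg)^2 * (sg * C * L - d) / 2)"
    and E3: "2 * (G^3 * D1 - L^3 * D2) - 2 * gr * h = -6 * L^2 * ((1/c) * ((C / sg) / L)) * pi"
    and disp: "gr = G^2 * coth1 - L^2 * (C / sg)"
  shows False
proof -
  define S1 where "S1 = (1/sg)^2 * (sg * C * L - d) / 2"
  define q where "q = pi / c"
  have G3: "G^3 = G^2 * G" by (simp add: power3_eq_cube power2_eq_square)
  have L3: "L^3 = L^2 * L" by (simp add: power3_eq_cube power2_eq_square)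
  have a: "G^3 * D1 = G^2 * h * coth1" unfolding K1 G3 using G by simp
  have b0: "L^3 * (2 * pi / (c * L^3)) = 2 * q" unfolding q_def using L c by simp
  have b1: "L^3 * (h * ((C / sg) / L)) = L^2 * h * (C / sg)" unfolding L3 using L by simp
  have "L^3 * D2 = L^3 * (h * ((C / sg) / L)) + (L^3 * (2 * pi / (c * L^3))) * S1"
    unfolding K2 S1_def[symmetric] by (simp only: distrib_left mult.assoc)
  then have b: "L^3 * D2 = L^2 * h * (C / sg) + 2 * q * S1" unfolding b0 b1 by simp
  have r: "-6 * L^2 * ((1/c) * ((C / sg) / L)) * pi = - 6 * q * (L * (C / sg))"
    unfolding q_def power2_eq_square using L by simp
  have "2 * (G^3 * D1 - L^3 * D2) - 2 * gr * h = - 4 * q * S1"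
    unfolding a b disp by (simp add: algebra_simps)
  then have "4 * q * S1 = 6 * q * (L * (C / sg))" using E3 r by linarith
  moreover have "q \<noteq> 0" unfolding q_def using c by simp
  ultimately have e: "4 * S1 = 6 * (L * (C / sg))"
  proof -
    assume A: "4 * q * S1 = 6 * q * (L * (C / sg))" and qn: "q \<noteq> 0"
    have "4 * S1 = (4 * q * S1) / q" using qn by simp
    also have "\<dots> = (6 * q * (L * (C / sg))) / q" unfolding A ..
    also have "\<dots> = 6 * (L * (C / sg))" using qn by simp
    finally show ?thesis .
  qed
  have "sg^2 * (4 * S1) = 2 * (sg * C * L - d)" unfolding S1_def using sg by (simp add: power2_eq_square)
  also have "sg^2 * (4 * S1) = 6 * L * C * sg" unfolding e using sg by (simp add: power2_eq_square)
  finally have "2 * (sg * C * L - d) = 6 * L * C * sg" by simp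
  then have "d = - 2 * (L * C * sg)" by (simp add: algebra_simps)
  moreover have "L * C * sg > 0" using L C sg by simp
  ultimately show False using d by linarith
qed

theorem lemma3p7:
  fixes a g l p0 p1 jrho Gam lamstar :: real
    and phistar :: "real \<times> real \<Rightarrow> real"
  assumes "0 < a" and "a < 1"
    and "g > 0" and "l > 0" and "p0 < p1" and "p1 < 0" and "jrho < 0" and "Gam > 0"
    and "\<bar>p1\<bar> = Gam * l"
    and "g * jrho - Gam^2 * coth (p1 / Gam) < 0"
    and "lamstar > 0"
    and "g * jrho = Gam^2 * coth (p1 / Gam) - lamstar^2 * coth ((p1 - p0) / lamstar)"
    and "\<forall>lam>0. g * jrho = Gam^2 * coth (p1 / Gam) - lam^2 * coth ((p1 - p0) / lam) \<longrightarrow> lam = lamstar"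
    and "generates_kernel a g jrho Gam p0 p1 lamstar phistar"
  shows "\<not> in_range a g jrho Gam p0 p1 lamstar (dLop g jrho Gam p0 p1 lamstar phistar)"
proof
  assume R: "in_range a g jrho Gam p0 p1 lamstar (dLop g jrho Gam p0 p1 lamstar phistar)"
  have a: "0 < a" "a < 1" using assms(1) assms(2) by auto
  have Gp: "Gam > 0" using assms(8) .
  have lp: "lamstar > 0" using assms(11) .
  have p01: "p0 < p1" using assms(5) .
  have p1n: "p1 < 0" using assms(6) .
  have disp: "g * jrho = Gam^2 * coth (p1 / Gam) - lamstar^2 * coth ((p1 - p0) / lamstar)"
    using assms(12) .
  have GK: "generates_kernel a g jrho Gam p0 p1 lamstar phistar" using assms(14) .
  define P where "P = psi0 Gam lamstar p0 p1"
  have XP: "Xsp a p0 p1 P" unfolding P_def by (rule psi0_Xsp[OF Gp lp p01 p1n a])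
  have KP: "eqY p0 p1 (Lop g jrho Gam p0 p1 lamstar P) zeroY"
    unfolding P_def by (rule psi0_ker[OF Gp lp p01 p1n disp])
  obtain c where c: "\<forall>x\<in>UNIV \<times> {p0..0}. P x = c * phistar x"
    using GK XP KP unfolding generates_kernel_def by blast
  have P1: "P (0, p1) = 1" using V1_p1[OF Gp lp p01 p1n] by (simp add: P_def psi0_def Wf_def cs0)
  have cne: "c \<noteq> 0" using c[rule_format, of "(0, p1)"] P1 p01 p1n by auto
  have phD': "phistar y = cs (1/c) 0 (fst y) * V2 lamstar p0 p1 0 (snd y)" if y: "y \<in> UNIV \<times> {p0..p1}" for y
  proof -
    have "P y = c * phistar y" using c y p1n by auto
    moreover have "P y = cs 1 0 (fst y) * V2 lamstar p0 p1 0 (snd y)"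
      unfolding P_def by (rule psi0_Lb[OF Gp lp p01 p1n y])
    ultimately show ?thesis using cne by (simp add: cs0 field_simps)
  qed
  have phB': "phistar y = cs (1/c) 0 (fst y) * V2 lamstar p0 p1 0 (snd y)" if y: "y \<in> UNIV \<times> {p0..<p1}" for y
    by (rule phD') (use y in auto)
  have phB: "\<forall>x\<in>UNIV \<times> {p0..<p1}. pd {p0..<p1} bs phistar x = cs (1/c) (cnt True bs) (fst x) * V2 lamstar p0 p1 (cnt False bs) (snd x)" for bs
    by (rule pd_prod[OF cs_deriv V2_deriv nb_Ico[OF p01] phB'])
  have phD: "\<forall>x\<in>UNIV \<times> {p0..p1}. pd {p0..p1} bs phistar x = cs (1/c) (cnt True bs) (fst x) * V2 lamstar p0 p1 (cnt False bs) (snd x)" for bs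
    by (rule pd_prod[OF cs_deriv V2_deriv nb_Icc[OF p01] phD'])
  obtain psi where XS: "Xsp a p0 p1 psi"
    and EQ: "eqY p0 p1 (Lop g jrho Gam p0 p1 lamstar psi) (dLop g jrho Gam p0 p1 lamstar phistar)"
    using R unfolding in_range_def by blast
  have E1: "pd {p1<..0} [False, False] psi x + (1 / Gam)^2 * pd {p1<..0} [True, True] psi x = 0"
    if x: "x \<in> UNIV \<times> {p1<..0}" for x
  proof -
    have "fst (Lop g jrho Gam p0 p1 lamstar psi) x = fst (dLop g jrho Gam p0 p1 lamstar phistar) x"
      using EQ x unfolding eqY_def by blast
    moreover have "fst (dLop g jrho Gam p0 p1 lamstar phistar) x = 0"
      unfolding dLop_def Lop_def fst_conv by (rule deriv_const')
    ultimately show ?thesis unfolding Lop_def fst_conv by simp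
  qed
  have E2: "pd {p0..<p1} [False, False] psi x + (1 / lamstar)^2 * pd {p0..<p1} [True, True] psi x
      = 2 / (c * lamstar^3) * cos (fst x) * V2 lamstar p0 p1 0 (snd x)"
    if x: "x \<in> UNIV \<times> {p0..<p1}" for x
  proof -
    have "fst (snd (Lop g jrho Gam p0 p1 lamstar psi)) x = fst (snd (dLop g jrho Gam p0 p1 lamstar phistar)) x"
      using EQ x unfolding eqY_def by blast
    moreover have "fst (snd (dLop g jrho Gam p0 p1 lamstar phistar)) x = -2 / lamstar^3 * pd {p0..<p1} [True, True] phistar x"
      unfolding dLop_def Lop_def fst_conv snd_conv by (rule deriv_comp2) (use lp in simp)
    moreover have "pd {p0..<p1} [True, True] phistar x = - (1/c) * cos (fst x) * V2 lamstar p0 p1 0 (snd x)"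
      using phB[rule_format, OF x, of "[True, True]"] by (simp add: cs2 numeral_2_eq_2[symmetric])
    ultimately show ?thesis unfolding Lop_def fst_conv snd_conv by (simp add: field_simps)
  qed
  have E3: "2 * (Gam ^ 3 * pd {p1..0} [False] psi (q, p1) - lamstar ^ 3 * pd {p0..p1} [False] psi (q, p1))
          - 2 * g * jrho * psi (q, p1) = -6 * lamstar^2 * ((1/c) * cos q * V2 lamstar p0 p1 1 p1)" for q
  proof -
    have x: "(q, p1) \<in> UNIV \<times> {p0..p1}" using p01 by auto
    have "fst (snd (snd (Lop g jrho Gam p0 p1 lamstar psi))) q = fst (snd (snd (dLop g jrho Gam p0 p1 lamstar phistar))) q"
      using EQ unfolding eqY_def by blast
    moreover have "fst (snd (snd (dLop g jrho Gam p0 p1 lamstar phistar))) q = -6 * lamstar^2 * pd {p0..p1} [False] phistar (q, p1)"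
    proof -
      have "fst (snd (snd (dLop g jrho Gam p0 p1 lamstar phistar))) q = deriv (\<lambda>l. 2 * (Gam ^ 3 * pd {p1..0} [False] phistar (q, p1) - l ^ 3 * pd {p0..p1} [False] phistar (q, p1))
          - 2 * g * jrho * phistar (q, p1)) lamstar"
        unfolding dLop_def Lop_def fst_conv snd_conv by (rule refl)
      also have "\<dots> = -6 * lamstar^2 * pd {p0..p1} [False] phistar (q, p1)" by (rule deriv_comp3)
      finally show ?thesis .
    qed
    moreover have "pd {p0..p1} [False] phistar (q, p1) = (1/c) * cos q * V2 lamstar p0 p1 1 p1"
      using phD[rule_format, OF x, of "[False]"] by (simp add: cs0)
    ultimately show ?thesis unfolding Lop_def fst_conv snd_conv by simp
  qed
  have E4: "psi (q, 0) = dmean p1 psi" for q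
  proof -
    have "snd (snd (snd (Lop g jrho Gam p0 p1 lamstar psi))) q = snd (snd (snd (dLop g jrho Gam p0 p1 lamstar phistar))) q"
      using EQ unfolding eqY_def by blast
    moreover have "snd (snd (snd (dLop g jrho Gam p0 p1 lamstar phistar))) q = 0"
      unfolding dLop_def Lop_def fst_conv snd_conv by (rule deriv_const')
    ultimately show ?thesis unfolding Lop_def fst_conv snd_conv by simp
  qed
  have PE: "per_even {p0..0} psi" and C1: "Cka a 2 {p1<..0} psi" and C2: "Cka a 2 {p0..<p1} psi"
    and C0: "Cka a 0 {p0..0} psi" and C3: "Cka a 1 {p1..0} psi" and C4: "Cka a 1 {p0..p1} psi"
    and Z: "\<forall>q. psi (q, p0) = 0"
    using XS unfolding Xsp_def by auto
  have cpsi: "continuous_on (UNIV \<times> {p0..0}) psi" using Cka_cont[OF C0, of "[]"] by simp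
  have cD1: "continuous_on (UNIV \<times> {p1..0}) (pd {p1..0} [False] psi)" by (rule Cka_cont[OF C3]) simp
  have cD2: "continuous_on (UNIV \<times> {p0..p1}) (pd {p0..p1} [False] psi)" by (rule Cka_cont[OF C4]) simp
  have cTT1: "continuous_on (UNIV \<times> {p1<..0}) (pd {p1<..0} [True, True] psi)" by (rule Cka_cont[OF C1]) simp
  have cTT2: "continuous_on (UNIV \<times> {p0..<p1}) (pd {p0..<p1} [True, True] psi)" by (rule Cka_cont[OF C2]) simp
  define H where "H = Fc psi"
  define D1 where "D1 = Fc (pd {p1..0} [False] psi)"
  define D2 where "D2 = Fc (pd {p0..p1} [False] psi)"
  have Hc: "continuous_on {p0..0} H" unfolding H_def by (rule Fc_cont[OF cpsi])
  have D1c: "continuous_on {p1..0} D1" unfolding D1_def by (rule Fc_cont[OF cD1])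
  have D2c: "continuous_on {p0..p1} D2" unfolding D2_def by (rule Fc_cont[OF cD2])
  have HD1: "(H has_real_derivative D1 p) (at p)" if "p \<in> {p1<..<0}" for p
    unfolding H_def D1_def by (rule Fc_deriv1[OF C3 _ that]) auto
  have HD2: "(H has_real_derivative D2 p) (at p)" if "p \<in> {p0<..<p1}" for p
    unfolding H_def D2_def by (rule Fc_deriv1[OF C4 _ that]) auto
  have hasFc: "((\<lambda>t. f (t, p) * cos t) has_integral Fc f p) {-pi..pi}"
    if "continuous_on (UNIV \<times> J) f" "p \<in> J" for f J p
  proof -
    have "continuous_on {-pi..pi} (\<lambda>t. f (t, p) * cos t)"
      by (intro continuous_on_mult cont_line[OF that] continuous_intros)
    then show ?thesis unfolding Fc_def by (intro integrable_integral integrable_continuous_interval)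
  qed
  have cos2: "((\<lambda>t. cos t * cos t) has_integral pi) {-pi..pi}"
  proof -
    have "(\<lambda>t. cos t * cos t) integrable_on {-pi..pi}"
      by (intro integrable_continuous_interval continuous_intros)
    then show ?thesis using integral_cos2 integrable_integral by fastforce
  qed
  have DD1: "(D1 has_real_derivative (1/Gam)^2 * H p) (at p)" if p: "p \<in> {p1<..<0}" for p
  proof -
    have pJ: "p \<in> {p1<..0}" using p by auto
    have "(D1 has_real_derivative Fc (pd {p1<..0} [False, False] psi) p) (at p)"
      unfolding D1_def by (rule Fc_deriv2[OF C1 C3 _ _ p]) auto
    moreover have "Fc (pd {p1<..0} [False, False] psi) p = (1/Gam)^2 * H p"
    proof -
      have ext1: "(\<lambda>t. pd {p1<..0} [False, False] psi (t, p) * cos t) = (\<lambda>t. (- ((1/Gam)^2)) * (pd {p1<..0} [True, True] psi (t, p) * cos t))"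
      proof
        fix t :: real
        have "(t, p) \<in> UNIV \<times> {p1<..0}" using pJ by auto
        from E1[OF this] have "pd {p1<..0} [False, False] psi (t, p) = - ((1/Gam)^2 * pd {p1<..0} [True, True] psi (t, p))"
          by linarith
        then show "pd {p1<..0} [False, False] psi (t, p) * cos t = (- ((1/Gam)^2)) * (pd {p1<..0} [True, True] psi (t, p) * cos t)"
          by simp
      qed
      have "((\<lambda>t. pd {p1<..0} [False, False] psi (t, p) * cos t) has_integral (- ((1/Gam)^2)) * Fc (pd {p1<..0} [True, True] psi) p) {-pi..pi}"
        unfolding ext1 by (rule has_integral_mult_right[OF hasFc[OF cTT1 pJ]])
      then have "Fc (pd {p1<..0} [False, False] psi) p = (- ((1/Gam)^2)) * Fc (pd {p1<..0} [True, True] psi) p"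
        unfolding Fc_def by (rule integral_unique)
      also have "Fc (pd {p1<..0} [True, True] psi) p = - H p"
        unfolding H_def by (rule qpart[OF C1 PE pJ]) (use p01 in auto)
      finally show ?thesis by simp
    qed
    ultimately show ?thesis by simp
  qed
  define kap where "kap = 2 * pi / (c * lamstar^3)"
  have DD2: "(D2 has_real_derivative (1/lamstar)^2 * H p + kap * V2 lamstar p0 p1 0 p) (at p)" if p: "p \<in> {p0<..<p1}" for p
  proof -
    have pJ: "p \<in> {p0..<p1}" using p by auto
    have "(D2 has_real_derivative Fc (pd {p0..<p1} [False, False] psi) p) (at p)"
      unfolding D2_def by (rule Fc_deriv2[OF C2 C4 _ _ p]) auto
    moreover have "Fc (pd {p0..<p1} [False, False] psi) p = (1/lamstar)^2 * H p + kap * V2 lamstar p0 p1 0 p"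
    proof -
      let ?K = "2 / (c * lamstar^3) * V2 lamstar p0 p1 0 p"
      have ext1: "(\<lambda>t. pd {p0..<p1} [False, False] psi (t, p) * cos t) = (\<lambda>t. ?K * (cos t * cos t) - (1/lamstar)^2 * (pd {p0..<p1} [True, True] psi (t, p) * cos t))"
      proof
        fix t :: real
        have "(t, p) \<in> UNIV \<times> {p0..<p1}" using pJ by auto
        from E2[OF this] have hX: "pd {p0..<p1} [False, False] psi (t, p) = 2 / (c * lamstar^3) * cos t * V2 lamstar p0 p1 0 p - (1/lamstar)^2 * pd {p0..<p1} [True, True] psi (t, p)"
          by simp
        then show "pd {p0..<p1} [False, False] psi (t, p) * cos t = ?K * (cos t * cos t) - (1/lamstar)^2 * (pd {p0..<p1} [True, True] psi (t, p) * cos t)"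
          by (simp only:) (simp add: algebra_simps)
      qed
      have "((\<lambda>t. pd {p0..<p1} [False, False] psi (t, p) * cos t) has_integral ?K * pi - (1/lamstar)^2 * Fc (pd {p0..<p1} [True, True] psi) p) {-pi..pi}"
        unfolding ext1 by (rule has_integral_diff[OF has_integral_mult_right[OF cos2] has_integral_mult_right[OF hasFc[OF cTT2 pJ]]])
      then have "Fc (pd {p0..<p1} [False, False] psi) p = ?K * pi - (1/lamstar)^2 * Fc (pd {p0..<p1} [True, True] psi) p"
        unfolding Fc_def by (rule integral_unique)
      also have "Fc (pd {p0..<p1} [True, True] psi) p = - H p"
        unfolding H_def by (rule qpart[OF C2 PE pJ]) (use p1n in auto)
      finally show ?thesis unfolding kap_def by simp
    qed
    ultimately show ?thesis by simp
  qed
  have H0: "H 0 = 0"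
  proof -
    have "(\<lambda>t. psi (t, 0) * cos t) = (\<lambda>t. dmean p1 psi * cos t)" using E4 by simp
    then show ?thesis unfolding H_def Fc_def using integral_cos0 by simp
  qed
  have Hp0: "H p0 = 0" unfolding H_def Fc_def using Z by simp
  have E3i: "2 * (Gam^3 * D1 p1 - lamstar^3 * D2 p1) - 2 * g * jrho * H p1 = -6 * lamstar^2 * ((1/c) * V2 lamstar p0 p1 1 p1) * pi"
  proof -
    have j1: "p1 \<in> {p1..0}" "p1 \<in> {p0..p1}" "p1 \<in> {p0..0}" using p01 p1n by auto
    note hA = hasFc[OF cD1 j1(1)] and hB = hasFc[OF cD2 j1(2)] and hC = hasFc[OF cpsi j1(3)]
    let ?K = "-6 * lamstar^2 * ((1/c) * V2 lamstar p0 p1 1 p1)"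
    have I1: "((\<lambda>t. 2 * (Gam^3 * (pd {p1..0} [False] psi (t, p1) * cos t) - lamstar^3 * (pd {p0..p1} [False] psi (t, p1) * cos t))
        - 2 * g * jrho * (psi (t, p1) * cos t)) has_integral 2 * (Gam^3 * D1 p1 - lamstar^3 * D2 p1) - 2 * g * jrho * H p1) {-pi..pi}"
      unfolding D1_def D2_def H_def
      by (rule has_integral_diff[OF has_integral_mult_right[OF has_integral_diff[OF has_integral_mult_right[OF hA] has_integral_mult_right[OF hB]]] has_integral_mult_right[OF hC]])
    have ext1: "(\<lambda>t. 2 * (Gam^3 * (pd {p1..0} [False] psi (t, p1) * cos t) - lamstar^3 * (pd {p0..p1} [False] psi (t, p1) * cos t))
        - 2 * g * jrho * (psi (t, p1) * cos t)) = (\<lambda>t. ?K * (cos t * cos t))"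
    proof
      fix t :: real
      have "(2 * (Gam ^ 3 * pd {p1..0} [False] psi (t, p1) - lamstar ^ 3 * pd {p0..p1} [False] psi (t, p1))
          - 2 * g * jrho * psi (t, p1)) * cos t = (-6 * lamstar^2 * ((1/c) * cos t * V2 lamstar p0 p1 1 p1)) * cos t"
        using E3[of t] by simp
      then show "2 * (Gam^3 * (pd {p1..0} [False] psi (t, p1) * cos t) - lamstar^3 * (pd {p0..p1} [False] psi (t, p1) * cos t))
        - 2 * g * jrho * (psi (t, p1) * cos t) = ?K * (cos t * cos t)"
        by (simp add: algebra_simps)
    qed
    have I2: "((\<lambda>t. ?K * (cos t * cos t)) has_integral ?K * pi) {-pi..pi}"
      by (rule has_integral_mult_right[OF cos2])
    have "2 * (Gam^3 * D1 p1 - lamstar^3 * D2 p1) - 2 * g * jrho * H p1 = ?K * pi"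
      using I1 unfolding ext1 by (rule has_integral_unique[OF _ I2])
    then show ?thesis by simp
  qed
  have cV1: "continuous_on S (V1 Gam p1 n)" for n S
    using V1_deriv by (metis DERIV_isCont continuous_at_imp_continuous_on)
  have cV2: "continuous_on S (V2 lamstar p0 p1 n)" for n S
    using V2_deriv by (metis DERIV_isCont continuous_at_imp_continuous_on)
  define K1 where "K1 p = D1 p * V1 Gam p1 0 p - H p * V1 Gam p1 1 p" for p
  have K1c: "continuous_on {p1..0} K1"
    unfolding K1_def[abs_def]
    by (intro continuous_on_diff continuous_on_mult D1c continuous_on_subset[OF Hc] cV1) (use p01 in auto)
  have K1d: "(K1 has_real_derivative 0) (at p)" if "p1 < p" "p < 0" for p
  proof -
    have "(K1 has_real_derivative ((1/Gam)^2 * H p) * V1 Gam p1 0 p + V1 Gam p1 (Suc 0) p * D1 p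
        - (D1 p * V1 Gam p1 1 p + V1 Gam p1 (Suc 1) p * H p)) (at p)"
      unfolding K1_def[abs_def] by (intro DERIV_diff DERIV_mult DD1 HD1 V1_deriv) (use that in auto)
    then show ?thesis by (simp add: V1_2[simplified numeral_2_eq_2] algebra_simps power_one_over power2_eq_square)
  qed
  have "K1 0 = K1 p1" by (rule DERIV_isconst_end[OF p1n K1c K1d])
  then have K1e: "D1 p1 = H p1 * (coth (p1/Gam) / Gam)"
    unfolding K1_def using H0 V1_0 V1_p1[OF Gp lp p01 p1n] V1_1[OF Gp lp p01 p1n] by simp
  define sg where "sg = sinh ((p1 - p0) / lamstar)"
  define Cc where "Cc = cosh ((p1 - p0) / lamstar)"
  define S where "S p = (1/sg)^2 * (sinh ((1/lamstar) * (p - p0)) * cosh ((1/lamstar) * (p - p0)) * lamstar - (p - p0)) / 2" for p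
  have V20: "V2 lamstar p0 p1 0 p = (1/sg) * sinh ((1/lamstar) * (p - p0))" for p
    unfolding V2_def sg_def by (simp add: vf0)
  have Sd: "(S has_real_derivative V2 lamstar p0 p1 0 p * V2 lamstar p0 p1 0 p) (at p)" for p
  proof -
    let ?u = "(1/lamstar) * (p - p0)"
    have "(S has_real_derivative (1/sg)^2 * ((cosh ?u * (1/lamstar) * cosh ?u + sinh ?u * (sinh ?u * (1/lamstar))) * lamstar - 1) / 2) (at p)"
      unfolding S_def[abs_def] using lp by (auto intro!: derivative_eq_intros)
    moreover have "(1/sg)^2 * ((cosh ?u * (1/lamstar) * cosh ?u + sinh ?u * (sinh ?u * (1/lamstar))) * lamstar - 1) / 2
        = V2 lamstar p0 p1 0 p * V2 lamstar p0 p1 0 p"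
      unfolding V20 using lp cosh_square_eq[of ?u] by (simp add: power2_eq_square field_simps)
    ultimately show ?thesis by simp
  qed
  define K2 where "K2 p = D2 p * V2 lamstar p0 p1 0 p - H p * V2 lamstar p0 p1 1 p - kap * S p" for p
  have K2c: "continuous_on {p0..p1} K2"
  proof -
    have "continuous_on {p0..p1} S" using Sd by (metis DERIV_isCont continuous_at_imp_continuous_on)
    then show ?thesis unfolding K2_def[abs_def]
      by (intro continuous_on_diff continuous_on_mult D2c continuous_on_subset[OF Hc] cV2 continuous_on_const) (use p1n in auto)
  qed
  have K2d: "(K2 has_real_derivative 0) (at p)" if "p0 < p" "p < p1" for p
  proof -
    have "(K2 has_real_derivative ((1/lamstar)^2 * H p + kap * V2 lamstar p0 p1 0 p) * V2 lamstar p0 p1 0 p + V2 lamstar p0 p1 (Suc 0) p * D2 p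
        - (D2 p * V2 lamstar p0 p1 1 p + V2 lamstar p0 p1 (Suc 1) p * H p) - kap * (V2 lamstar p0 p1 0 p * V2 lamstar p0 p1 0 p)) (at p)"
      unfolding K2_def[abs_def] by (intro DERIV_diff DERIV_mult DD2 HD2 V2_deriv DERIV_cmult Sd) (use that in auto)
    then show ?thesis by (simp add: V2_2[simplified numeral_2_eq_2] algebra_simps power_one_over power2_eq_square)
  qed
  have "K2 p1 = K2 p0" by (rule DERIV_isconst_end[OF p01 K2c K2d])
  moreover have "K2 p0 = 0" unfolding K2_def S_def using Hp0 V2_0 by simp
  ultimately have K2e: "D2 p1 - H p1 * V2 lamstar p0 p1 1 p1 - kap * S p1 = 0"
    unfolding K2_def using V2_p1[OF Gp lp p01 p1n] by simp
  have sgp: "sg > 0" unfolding sg_def using lp p01 by simp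
  have Ccp: "Cc > 0" unfolding Cc_def by simp
  have V21: "V2 lamstar p0 p1 1 p1 = (Cc / sg) / lamstar"
    unfolding V2_1[OF Gp lp p01 p1n] coth_def Cc_def sg_def ..
  have Sp1: "S p1 = (1/sg)^2 * (sg * Cc * lamstar - (p1 - p0)) / 2"
    unfolding S_def sg_def Cc_def by simp
  show False
  proof (rule final_alg[OF Gp lp cne sgp Ccp _ K1e])
    show "p1 - p0 > 0" using p01 by simp
    show "D2 p1 = H p1 * ((Cc / sg) / lamstar) + (2 * pi / (c * lamstar^3)) * ((1/sg)^2 * (sg * Cc * lamstar - (p1 - p0)) / 2)"
      using K2e unfolding V21 Sp1 kap_def by simp
    show "2 * (Gam^3 * D1 p1 - lamstar^3 * D2 p1) - 2 * (g * jrho) * H p1 = -6 * lamstar^2 * ((1/c) * ((Cc / sg) / lamstar)) * pi"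
      using E3i unfolding V21 by (simp add: mult.assoc)
    show "g * jrho = Gam^2 * coth (p1 / Gam) - lamstar^2 * (Cc / sg)"
      using disp unfolding coth_def[of "(p1 - p0) / lamstar"] Cc_def sg_def .
  qed
qed

end
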